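(* Let $\Delta$ be an $(n-1)$-dimensional simplicial complex with symmetric $h$-vector $h(\Delta)=(h_0,\dots,h_n)$ (i.e. $h_i=h_{n-i}$). Then for each $r$, $h_r(\mathrm{Int}(\Delta))=\sum_{j=0}^{\lfloor n/2\rfloor}h_j\,[t^r]\,\mathbb{B}^+_{n+1,j+1}(t)$, i.e. $$h(\mathrm{Int}(\Delta),t)=\sum_{j=0}^{\lfloor n/2\rfloor}h_j\,\mathbb{B}^+_{n+1,j+1}(t),$$ and in terms of $\gamma$-vectors, $\gamma(\mathrm{Int}(\Delta))=\sum_{j=0}^{\lfloor n/2\rfloor}h_j\,\gamma^{(n+1,j+1)}$.
   Context: For a $(d-1)$-dimensional complex with $f$-polynomial $f(t)=\sum_{i}f_it^i$ ($f_i$ = number of faces with $i$ vertices), the $h$-polynomial is $h(t)=(1-t)^df(t/(1-t))=\sum h_it^i$; if symmetric, the $\gamma$-vector $(\gamma_0,\dots,\gamma_{\lfloor d/2\rfloor})$ is defined by $h(t)=\sum_i\gamma_it^i(1+t)^{d-2i}$. $\mathrm{Int}(\Delta)$ is the order complex of the poset $\{[A,B]:\emptyset\ne A\subseteq B\in\Delta\}$ with $[A,B]\le[A',B']$ iff $A'\subseteq A\subseteq B\subseteq B'$ (it has dimension $n-1$). $B_N$ is the group of signed permutations $\sigma=\sigma_1\cdots\sigma_N$ of $\{\pm1,\dots,\pm N\}$; with $\sigma_0=0$, $\mathrm{des}_B(\sigma)=|\{i\in\{0,\dots,N-1\}:\sigma_i>\sigma_{i+1}\}|$. For $1\le j\le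 N$, $B^+_{N,j}(t)=\sum t^{\mathrm{des}_B(\sigma)}$ over $\sigma\in B_N$ with $\sigma_N>0$, $\sigma_1=j$; $\mathbb{B}^+_{N,j}=B^+_{N,j}+B^+_{N,N-j+1}$ if $j\ne(N+1)/2$ and $\mathbb{B}^+_{N,j}=B^+_{N,j}$ if $j=(N+1)/2$. $\gamma^{(N,j)}$ is the unique vector $(\gamma_0,\dots,\gamma_{\lfloor (N-1)/2\rfloor})$ with $\mathbb{B}^+_{N,j}(t)=\sum_k\gamma_kt^k(1+t)^{N-1-2k}$. $[t^r]P$ denotes the coefficient of $t^r$ in $P$. *)

theory Defs
  imports "HOL-Computational_Algebra.Polynomial"
begin

definition simplicial_complex :: "'a set set \<Rightarrow> bool" where
  "simplicial_complex K \<longleftrightarrow> finite K \<and> {} \<in> K \<and> (\<forall>F\<in>K. finite F) \<and>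
     (\<forall>F\<in>K. \<forall>G. G \<subseteq> F \<longrightarrow> G \<in> K)"

definition f_poly :: "'a set set \<Rightarrow> int poly" where
  "f_poly K = (\<Sum>F\<in>K. monom 1 (card F))"

(* h-polynomial h(t) = (1-t)^d f(t/(1-t)) = sum_F t^|F| (1-t)^(d-|F|),
   where d = dimension + 1 = maximal face cardinality. *)
definition h_poly :: "nat \<Rightarrow> 'a set set \<Rightarrow> int poly" where
  "h_poly d K = (\<Sum>F\<in>K. monom 1 (card F) * [:1, -1:] ^ (d - card F))"

definition int_poset :: "'a set set \<Rightarrow> ('a set \<times> 'a set) set" where
  "int_poset K = {(A, B). A \<noteq> {} \<and> A \<subseteq> B \<and> B \<in> K}"

definition int_le :: "('a set \<times> 'a set) \<Rightarrow> ('a set \<times> 'a set) \<Rightarrow> bool" where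
  "int_le p q \<longleftrightarrow> fst q \<subseteq> fst p \<and> snd p \<subseteq> snd q"

definition order_complex :: "'b set \<Rightarrow> ('b \<Rightarrow> 'b \<Rightarrow> bool) \<Rightarrow> 'b set set" where
  "order_complex P le = {C. C \<subseteq> P \<and> finite C \<and> (\<forall>x\<in>C. \<forall>y\<in>C. le x y \<or> le y x)}"

definition Int_complex :: "'a set set \<Rightarrow> ('a set \<times> 'a set) set set" where
  "Int_complex K = order_complex (int_poset K) int_le"

(* signed permutations of {1..N}: sigma i for i in {1..N}, sigma i = 0 elsewhere
   (so sigma 0 = 0), |sigma| a permutation of {1..N} *)
definition signed_perms :: "nat \<Rightarrow> (nat \<Rightarrow> int) set" where
  "signed_perms N = {\<sigma>. (\<forall>i. i \<notin> {1..N} \<longrightarrow> \<sigma> i = 0) \<and>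
       bij_betw (\<lambda>i. nat \<bar>\<sigma> i\<bar>) {1..N} {1..N}}"

definition desB :: "nat \<Rightarrow> (nat \<Rightarrow> int) \<Rightarrow> nat" where
  "desB N \<sigma> = card {i \<in> {0..<N}. \<sigma> i > \<sigma> (Suc i)}"

definition Bplus :: "nat \<Rightarrow> nat \<Rightarrow> int poly" where
  "Bplus N j = (\<Sum>\<sigma>\<in>{\<sigma> \<in> signed_perms N. \<sigma> N > 0 \<and> \<sigma> 1 = int j}. monom 1 (desB N \<sigma>))"

definition BBplus :: "nat \<Rightarrow> nat \<Rightarrow> int poly" where
  "BBplus N j = (if 2 * j \<noteq> N + 1 then Bplus N j + Bplus N (N - j + 1) else Bplus N j)"

definition gamma_vec :: "nat \<Rightarrow> int poly \<Rightarrow> nat \<Rightarrow> int" where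
  "gamma_vec d p = (THE g. (\<forall>i > d div 2. g i = 0) \<and>
      p = (\<Sum>i\<le>d div 2. smult (g i) (monom 1 i * [:1, 1:] ^ (d - 2 * i))))"

end

theory Submission
  imports Defs "HOL-Library.FuncSet" "HOL-Computational_Algebra.Polynomial_FPS"
begin

unbundle fps_syntax

lemma sp_zero: "\<sigma> \<in> signed_perms N \<Longrightarrow> k \<notin> {1..N} \<Longrightarrow> \<sigma> k = 0"
  by (auto simp: signed_perms_def)

lemma sp_range:
  assumes "\<sigma> \<in> signed_perms N" "k \<in> {1..N}"
  shows "1 \<le> \<bar>\<sigma> k\<bar> \<and> \<bar>\<sigma> k\<bar> \<le> int N"
proof -
  have "nat \<bar>\<sigma> k\<bar> \<in> {1..N}" using assms unfolding signed_perms_def bij_betw_def by auto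
  then show ?thesis by auto
qed

lemma sp_inj:
  assumes "\<sigma> \<in> signed_perms N" "k \<in> {1..N}" "k' \<in> {1..N}" "\<bar>\<sigma> k\<bar> = \<bar>\<sigma> k'\<bar>"
  shows "k = k'"
proof -
  have "inj_on (\<lambda>i. nat \<bar>\<sigma> i\<bar>) {1..N}" using assms(1) unfolding signed_perms_def bij_betw_def by auto
  moreover have "nat \<bar>\<sigma> k\<bar> = nat \<bar>\<sigma> k'\<bar>" using assms(4) by simp
  ultimately show ?thesis using assms(2-3) by (meson inj_onD)
qed

lemma sp_intro:
  assumes "\<And>k. k \<notin> {1..N} \<Longrightarrow> \<sigma> k = 0"
    and "\<And>k. k \<in> {1..N} \<Longrightarrow> 1 \<le> \<bar>\<sigma> k\<bar> \<and> \<bar>\<sigma> k\<bar> \<le> int N"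
    and "\<And>k k'. k \<in> {1..N} \<Longrightarrow> k' \<in> {1..N} \<Longrightarrow> \<bar>\<sigma> k\<bar> = \<bar>\<sigma> k'\<bar> \<Longrightarrow> k = k'"
  shows "\<sigma> \<in> signed_perms N"
proof -
  let ?f = "\<lambda>i. nat \<bar>\<sigma> i\<bar>"
  have inj: "inj_on ?f {1..N}"
    by (rule inj_onI) (use assms(2,3) in \<open>metis abs_ge_zero nat_eq_iff2\<close>)
  have sub: "?f ` {1..N} \<subseteq> {1..N}" using assms(2) by fastforce
  have "card (?f ` {1..N}) = card {1..N}" using card_image[OF inj] .
  then have "?f ` {1..N} = {1..N}" using sub by (simp add: card_subset_eq)
  then have "bij_betw ?f {1..N} {1..N}" using inj by (simp add: bij_betw_def)
  then show ?thesis using assms(1) by (simp add: signed_perms_def)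
qed

definition ustd :: "int \<Rightarrow> int \<Rightarrow> int" where
  "ustd j v = (if \<bar>v\<bar> \<ge> \<bar>j\<bar> then v + sgn v else v)"
definition std :: "int \<Rightarrow> int \<Rightarrow> int" where
  "std j v = (if \<bar>v\<bar> > \<bar>j\<bar> then v - sgn v else v)"

lemma ustd_mono: "\<bar>j\<bar> \<ge> 1 \<Longrightarrow> (ustd j a < ustd j b) = (a < b)"
  unfolding ustd_def by (auto simp: sgn_if split: if_splits)

lemma ustd_inj: "\<bar>j\<bar> \<ge> 1 \<Longrightarrow> (ustd j a = ustd j b) = (a = b)"
  unfolding ustd_def by (auto simp: sgn_if split: if_splits)

lemma abs_ustd: "\<bar>j\<bar> \<ge> 1 \<Longrightarrow> \<bar>ustd j v\<bar> = (if \<bar>v\<bar> \<ge> \<bar>j\<bar> \<and> v \<noteq> 0 then \<bar>v\<bar> + 1 else \<bar>v\<bar>)"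
  unfolding ustd_def by (auto simp: sgn_if)

lemma ustd_std: "\<bar>j\<bar> \<ge> 1 \<Longrightarrow> \<bar>v\<bar> \<noteq> \<bar>j\<bar> \<Longrightarrow> ustd j (std j v) = v"
  unfolding ustd_def std_def by (auto simp: sgn_if)

lemma std_ustd: "\<bar>j\<bar> \<ge> 1 \<Longrightarrow> std j (ustd j v) = v"
  unfolding ustd_def std_def by (auto simp: sgn_if)

lemma abs_std: "\<bar>std j v\<bar> = (if \<bar>v\<bar> > \<bar>j\<bar> then \<bar>v\<bar> - 1 else \<bar>v\<bar>)"
  unfolding std_def by (auto simp: sgn_if)

lemma sgn_ustd: "sgn (ustd j v) = sgn v" unfolding ustd_def by (auto simp: sgn_if)
lemma sgn_std: "\<bar>j\<bar> \<ge> 1 \<Longrightarrow> sgn (std j v) = sgn v" unfolding std_def by (auto simp: sgn_if)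

definition SPj :: "nat \<Rightarrow> int \<Rightarrow> (nat \<Rightarrow> int) set" where
  "SPj N j = {\<sigma> \<in> signed_perms N. \<sigma> N > 0 \<and> \<sigma> 1 = j}"

definition Bg :: "nat \<Rightarrow> int \<Rightarrow> int poly" where
  "Bg N j = (\<Sum>\<sigma>\<in>SPj N j. monom 1 (desB N \<sigma>))"

lemma Bplus_Bg: "Bplus N j = Bg N (int j)"
  unfolding Bplus_def Bg_def SPj_def by simp

definition TT :: "nat \<Rightarrow> (nat \<Rightarrow> int) set" where
  "TT N = {\<tau> \<in> signed_perms N. \<tau> N > 0}"

definition ext :: "nat \<Rightarrow> int \<Rightarrow> (nat \<Rightarrow> int) \<Rightarrow> nat \<Rightarrow> int" where
  "ext N j \<tau> k = (if k = 1 then j else if 2 \<le> k \<and> k \<le> Suc N then ustd j (\<tau> (k - 1)) else 0)"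

definition res :: "nat \<Rightarrow> int \<Rightarrow> (nat \<Rightarrow> int) \<Rightarrow> nat \<Rightarrow> int" where
  "res N j \<sigma> k = (if 1 \<le> k \<and> k \<le> N then std j (\<sigma> (Suc k)) else 0)"

lemma finite_sp: "finite (signed_perms N)"
proof -
  let ?g = "\<lambda>f::nat\<Rightarrow>int. \<lambda>k. if k \<in> {1..N} then f k else 0"
  have "signed_perms N \<subseteq> ?g ` (PiE {1..N} (\<lambda>_. {- int N..int N}))"
  proof
    fix \<sigma> assume s: "\<sigma> \<in> signed_perms N"
    have "\<sigma> = ?g (restrict \<sigma> {1..N})" using sp_zero[OF s] by (auto simp: fun_eq_iff)
    moreover have "restrict \<sigma> {1..N} \<in> PiE {1..N} (\<lambda>_. {- int N..int N})"
      using sp_range[OF s] by (force simp: abs_le_iff)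
    ultimately show "\<sigma> \<in> ?g ` (PiE {1..N} (\<lambda>_. {- int N..int N}))" by blast
  qed
  moreover have "finite (PiE {1..N} (\<lambda>_. {- int N..int N}))" by (rule finite_PiE) auto
  ultimately show ?thesis using finite_subset by blast
qed

lemma ext_in:
  assumes t: "\<tau> \<in> TT M" and M: "M \<ge> 1" and j: "1 \<le> \<bar>j\<bar>" "\<bar>j\<bar> \<le> int (Suc M)"
  shows "ext M j \<tau> \<in> SPj (Suc M) j"
proof -
  have tp: "\<tau> \<in> signed_perms M" and tM: "\<tau> M > 0" using t by (auto simp: TT_def)
  have "ext M j \<tau> \<in> signed_perms (Suc M)"
  proof (rule sp_intro)
    fix k assume "k \<notin> {1..Suc M}" then show "ext M j \<tau> k = 0" by (auto simp: ext_def)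
  next
    fix k assume k: "k \<in> {1..Suc M}"
    show "1 \<le> \<bar>ext M j \<tau> k\<bar> \<and> \<bar>ext M j \<tau> k\<bar> \<le> int (Suc M)"
    proof (cases "k = 1")
      case True then show ?thesis using j by (simp add: ext_def)
    next
      case False
      then have k1: "k - 1 \<in> {1..M}" using k by auto
      have "ext M j \<tau> k = ustd j (\<tau> (k - 1))" using False k by (auto simp: ext_def)
      then show ?thesis using sp_range[OF tp k1] abs_ustd[OF j(1), of "\<tau> (k - 1)"] by auto
    qed
  next
    fix k k' assume k: "k \<in> {1..Suc M}" and k': "k' \<in> {1..Suc M}"
      and eq: "\<bar>ext M j \<tau> k\<bar> = \<bar>ext M j \<tau> k'\<bar>"
    have neq: "\<bar>ustd j (\<tau> (i - 1))\<bar> \<noteq> \<bar>j\<bar>" if "i \<in> {2..Suc M}" for i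
    proof -
      have "i - 1 \<in> {1..M}" using that by auto
      from sp_range[OF tp this] show ?thesis using abs_ustd[OF j(1), of "\<tau> (i - 1)"] by auto
    qed
    show "k = k'"
    proof (cases "k = 1 \<or> k' = 1")
      case True
      have e1: "ext M j \<tau> i = ustd j (\<tau> (i - 1))" if "i \<in> {2..Suc M}" for i
        using that by (auto simp: ext_def)
      have e0: "ext M j \<tau> 1 = j" by (simp add: ext_def)
      show ?thesis
      proof (cases "k = 1 \<and> k' = 1")
        case True then show ?thesis by simp
      next
        case F: False
        show ?thesis
        proof (cases "k = 1")
          case True
          then have "k' \<in> {2..Suc M}" using F k' by auto
          then show ?thesis using eq e1 e0 neq True by metis
        next
          case False
          then have "k \<in> {2..Suc M}" "k' = 1" using F k True by auto
          then show ?thesis using eq e1 e0 neq by metis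
        qed
      qed
    next
      case False
      then have e1: "ext M j \<tau> k = ustd j (\<tau> (k - 1))" "ext M j \<tau> k' = ustd j (\<tau> (k' - 1))"
        using k k' by (auto simp: ext_def)
      have kk: "k - 1 \<in> {1..M}" "k' - 1 \<in> {1..M}" using k k' False by auto
      have "\<bar>\<tau> (k - 1)\<bar> = \<bar>\<tau> (k' - 1)\<bar>"
      proof -
        have r: "1 \<le> \<bar>\<tau> (k - 1)\<bar>" "1 \<le> \<bar>\<tau> (k' - 1)\<bar>" using sp_range[OF tp kk(1)] sp_range[OF tp kk(2)] by auto
        show ?thesis using eq unfolding e1 abs_ustd[OF j(1)] using r by (auto split: if_splits)
      qed
      from sp_inj[OF tp kk this] show ?thesis using kk by auto
    qed
  qed
  moreover have "ext M j \<tau> (Suc M) > 0"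
  proof -
    have "ext M j \<tau> (Suc M) = ustd j (\<tau> M)" using M by (auto simp: ext_def)
    moreover have "sgn (ustd j (\<tau> M)) = 1" using tM by (simp add: sgn_ustd)
    ultimately show ?thesis by (simp add: sgn_1_pos)
  qed
  moreover have "ext M j \<tau> 1 = j" by (simp add: ext_def)
  ultimately show ?thesis by (simp add: SPj_def)
qed

lemma res_in:
  assumes s: "\<sigma> \<in> SPj (Suc M) j" and M: "M \<ge> 1"
  shows "res M j \<sigma> \<in> TT M"
proof -
  have sp: "\<sigma> \<in> signed_perms (Suc M)" and sM: "\<sigma> (Suc M) > 0" and s1: "\<sigma> 1 = j"
    using s by (auto simp: SPj_def)
  have j1: "1 \<le> \<bar>j\<bar>" using sp_range[OF sp, of 1] s1 by auto
  have j2: "\<bar>j\<bar> \<le> int (Suc M)" using sp_range[OF sp, of 1] s1 by auto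
  have nj: "\<bar>\<sigma> (Suc k)\<bar> \<noteq> \<bar>j\<bar>" if "k \<in> {1..M}" for k
  proof
    assume "\<bar>\<sigma> (Suc k)\<bar> = \<bar>j\<bar>"
    then have "Suc k = 1" using sp_inj[OF sp, of "Suc k" 1] that s1 by auto
    then show False using that by auto
  qed
  have "res M j \<sigma> \<in> signed_perms M"
  proof (rule sp_intro)
    fix k assume "k \<notin> {1..M}" then show "res M j \<sigma> k = 0" by (auto simp: res_def)
  next
    fix k assume k: "k \<in> {1..M}"
    have r: "1 \<le> \<bar>\<sigma> (Suc k)\<bar>" "\<bar>\<sigma> (Suc k)\<bar> \<le> int (Suc M)" using sp_range[OF sp, of "Suc k"] k by auto
    show "1 \<le> \<bar>res M j \<sigma> k\<bar> \<and> \<bar>res M j \<sigma> k\<bar> \<le> int M"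
      using k r nj[OF k] j1 j2 by (auto simp: res_def abs_std)
  next
    fix k k' assume k: "k \<in> {1..M}" and k': "k' \<in> {1..M}"
      and eq: "\<bar>res M j \<sigma> k\<bar> = \<bar>res M j \<sigma> k'\<bar>"
    have e: "\<bar>\<sigma> (Suc k)\<bar> = \<bar>\<sigma> (Suc k')\<bar>"
      using eq k k' nj[OF k] nj[OF k'] by (auto simp: res_def abs_std split: if_splits)
    from sp_inj[OF sp _ _ e] show "k = k'" using k k' by auto
  qed
  moreover have "res M j \<sigma> M > 0"
  proof -
    have "res M j \<sigma> M = std j (\<sigma> (Suc M))" using M by (simp add: res_def)
    moreover have "sgn (std j (\<sigma> (Suc M))) = 1" using sM j1 by (simp add: sgn_std)
    ultimately show ?thesis by (simp add: sgn_1_pos)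
  qed
  ultimately show ?thesis by (simp add: TT_def)
qed

lemma ext_res:
  assumes s: "\<sigma> \<in> SPj (Suc M) j" and M: "M \<ge> 1"
  shows "ext M j (res M j \<sigma>) = \<sigma>"
proof
  fix k
  have sp: "\<sigma> \<in> signed_perms (Suc M)" and s1: "\<sigma> 1 = j"
    using s by (auto simp: SPj_def)
  have j1: "1 \<le> \<bar>j\<bar>" using sp_range[OF sp, of 1] s1 by auto
  show "ext M j (res M j \<sigma>) k = \<sigma> k"
  proof (cases "k = 1")
    case True then show ?thesis using s1 by (simp add: ext_def)
  next
    case False
    show ?thesis
    proof (cases "2 \<le> k \<and> k \<le> Suc M")
      case True
      have "\<bar>\<sigma> k\<bar> \<noteq> \<bar>j\<bar>"
      proof
        assume "\<bar>\<sigma> k\<bar> = \<bar>j\<bar>"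
        then have "k = 1" using sp_inj[OF sp, of k 1] True s1 by auto
        then show False using False by simp
      qed
      then show ?thesis using True False j1 by (auto simp: ext_def res_def ustd_std)
    next
      case F2: False
      then have "k \<notin> {1..Suc M}" using False by auto
      then show ?thesis using sp_zero[OF sp] False F2 by (auto simp: ext_def)
    qed
  qed
qed

lemma res_ext:
  assumes t: "\<tau> \<in> TT M" and j: "1 \<le> \<bar>j\<bar>"
  shows "res M j (ext M j \<tau>) = \<tau>"
proof
  fix k
  have tp: "\<tau> \<in> signed_perms M" using t by (auto simp: TT_def)
  show "res M j (ext M j \<tau>) k = \<tau> k"
    using sp_zero[OF tp, of k] j by (auto simp: res_def ext_def std_ustd)
qed

lemma bij_ext:
  assumes M: "M \<ge> 1" and j: "1 \<le> \<bar>j\<bar>" "\<bar>j\<bar> \<le> int (Suc M)"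
  shows "bij_betw (ext M j) (TT M) (SPj (Suc M) j)"
proof (rule bij_betw_byWitness[where f' = "res M j"])
  show "\<forall>a\<in>TT M. res M j (ext M j a) = a" using res_ext j by blast
  show "\<forall>a'\<in>SPj (Suc M) j. ext M j (res M j a') = a'" using ext_res M by blast
  show "ext M j ` TT M \<subseteq> SPj (Suc M) j" using ext_in M j by blast
  show "res M j ` SPj (Suc M) j \<subseteq> TT M" using res_in M by blast
qed

lemma desB_sum: "desB N \<sigma> = (\<Sum>i<N. if \<sigma> (Suc i) < \<sigma> i then 1 else 0)"
proof -
  have "desB N \<sigma> = (\<Sum>i\<in>{i \<in> {..<N}. \<sigma> (Suc i) < \<sigma> i}. 1)"
    unfolding desB_def by (simp add: lessThan_atLeast0)
  also have "\<dots> = (\<Sum>i<N. if \<sigma> (Suc i) < \<sigma> i then 1 else 0)"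
    by (subst sum.inter_filter) auto
  finally show ?thesis .
qed

definition dd :: "int \<Rightarrow> int \<Rightarrow> nat" where
  "dd j i = (if j > 0 then (if 0 < i \<and> i < j then 1 else 0) else (if 0 < i \<or> i \<le> j then 1 else 0))"

lemma desB_ext:
  assumes t: "\<tau> \<in> TT M" and M: "M \<ge> 1" and j: "1 \<le> \<bar>j\<bar>"
  shows "desB (Suc M) (ext M j \<tau>) = dd j (\<tau> 1) + desB M \<tau>"
proof -
  have tp: "\<tau> \<in> signed_perms M" using t by (auto simp: TT_def)
  obtain L where L: "M = Suc L" using M by (cases M) auto
  let ?s = "ext M j \<tau>"
  have t0: "\<tau> 0 = 0" using sp_zero[OF tp, of 0] by simp
  have t1: "\<tau> 1 \<noteq> 0" using sp_range[OF tp, of 1] M by auto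
  have "desB (Suc M) ?s = (\<Sum>i<Suc (Suc L). if ?s (Suc i) < ?s i then 1 else 0)"
    by (simp add: desB_sum L)
  also have "\<dots> = (if ?s 1 < ?s 0 then 1 else 0) + ((if ?s 2 < ?s 1 then 1 else 0) +
       (\<Sum>i<L. if ?s (Suc (Suc (Suc i))) < ?s (Suc (Suc i)) then 1 else 0))"
    unfolding sum.lessThan_Suc_shift by (simp add: numeral_2_eq_2)
  also have "(\<Sum>i<L. if ?s (Suc (Suc (Suc i))) < ?s (Suc (Suc i)) then 1 else 0)
      = (\<Sum>i<L. if \<tau> (Suc (Suc i)) < \<tau> (Suc i) then 1 else (0::nat))"
  proof (rule sum.cong)
    fix i assume "i \<in> {..<L}"
    then have "?s (Suc (Suc (Suc i))) = ustd j (\<tau> (Suc (Suc i)))" "?s (Suc (Suc i)) = ustd j (\<tau> (Suc i))"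
      using L by (auto simp: ext_def)
    then show "(if ?s (Suc (Suc (Suc i))) < ?s (Suc (Suc i)) then 1 else 0)
      = (if \<tau> (Suc (Suc i)) < \<tau> (Suc i) then 1 else (0::nat))" using ustd_mono[OF j] by simp
  qed simp
  finally have A0: "desB (Suc M) ?s = (if ?s 1 < ?s 0 then 1 else 0) + ((if ?s 2 < ?s 1 then 1 else 0) +
       (\<Sum>i<L. if \<tau> (Suc (Suc i)) < \<tau> (Suc i) then 1 else (0::nat)))" .
  have "?s 1 = j" "?s 0 = 0" "?s 2 = ustd j (\<tau> 1)" using L by (auto simp: ext_def)
  with A0 have A: "desB (Suc M) ?s = (if j < 0 then 1 else 0) + ((if ustd j (\<tau> 1) < j then 1 else 0) +
       (\<Sum>i<L. if \<tau> (Suc (Suc i)) < \<tau> (Suc i) then 1 else (0::nat)))" by simp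
  have B: "desB M \<tau> = (if \<tau> 1 < 0 then 1 else 0) +
       (\<Sum>i<L. if \<tau> (Suc (Suc i)) < \<tau> (Suc i) then 1 else (0::nat))"
    unfolding desB_sum L sum.lessThan_Suc_shift by (simp add: t0)
  have C: "(if j < 0 then 1 else 0) + (if ustd j (\<tau> 1) < j then 1 else 0)
      = dd j (\<tau> 1) + (if \<tau> 1 < 0 then 1 else (0::nat))"
    using t1 j unfolding dd_def ustd_def by (auto simp: sgn_if)
  show ?thesis using A B C by simp
qed

lemma finite_SPj: "finite (SPj N j)"
  using finite_sp unfolding SPj_def by auto

lemma finite_TT: "finite (TT N)"
  using finite_sp unfolding TT_def by auto

lemma Bg_rec:
  assumes M: "M \<ge> 1" and j: "1 \<le> \<bar>j\<bar>" "\<bar>j\<bar> \<le> int (Suc M)"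
  shows "Bg (Suc M) j = (\<Sum>i\<in>{- int M..int M} - {0}. monom 1 (dd j i) * Bg M i)"
proof -
  have "Bg (Suc M) j = (\<Sum>\<tau>\<in>TT M. monom 1 (desB (Suc M) (ext M j \<tau>)))"
    unfolding Bg_def by (rule sum.reindex_bij_betw[OF bij_ext[OF M j], symmetric])
  also have "\<dots> = (\<Sum>\<tau>\<in>TT M. monom 1 (dd j (\<tau> 1)) * monom 1 (desB M \<tau>))"
    by (rule sum.cong) (auto simp: desB_ext[OF _ M j(1)] mult_monom)
  also have "\<dots> = (\<Sum>i\<in>{- int M..int M} - {0}. \<Sum>\<tau>\<in>{\<tau>\<in>TT M. \<tau> 1 = i}. monom 1 (dd j (\<tau> 1)) * monom 1 (desB M \<tau>))"
  proof (rule sum.group[symmetric])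
    show "finite (TT M)" by (rule finite_TT)
    show "finite ({- int M..int M} - {0})" by simp
    show "(\<lambda>\<tau>. \<tau> 1) ` TT M \<subseteq> {- int M..int M} - {0}"
    proof
      fix x assume "x \<in> (\<lambda>\<tau>. \<tau> 1) ` TT M"
      then obtain \<tau> where "\<tau> \<in> TT M" "x = \<tau> 1" by auto
      then have "\<tau> \<in> signed_perms M" by (auto simp: TT_def)
      from sp_range[OF this, of 1] M show "x \<in> {- int M..int M} - {0}" using \<open>x = \<tau> 1\<close> by auto
    qed
  qed
  also have "\<dots> = (\<Sum>i\<in>{- int M..int M} - {0}. monom 1 (dd j i) * Bg M i)"
  proof (rule sum.cong)
    fix i assume "i \<in> {- int M..int M} - {0}"
    have "(\<Sum>\<tau>\<in>{\<tau>\<in>TT M. \<tau> 1 = i}. monom 1 (dd j (\<tau> 1)) * monom 1 (desB M \<tau>))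
        = (\<Sum>\<tau>\<in>SPj M i. monom 1 (dd j i) * monom 1 (desB M \<tau>))"
      by (rule sum.cong) (auto simp: TT_def SPj_def)
    also have "\<dots> = monom 1 (dd j i) * Bg M i" by (simp add: Bg_def sum_distrib_left)
    finally show "(\<Sum>\<tau>\<in>{\<tau>\<in>TT M. \<tau> 1 = i}. monom 1 (dd j (\<tau> 1)) * monom 1 (desB M \<tau>))
        = monom 1 (dd j i) * Bg M i" .
  qed simp
  finally show ?thesis .
qed

lemma sum_nonzero_split:
  "(\<Sum>i\<in>{- int M..int M} - {0}. f i) = (\<Sum>l=1..M. f (int l)) + (\<Sum>l=1..M. f (- int l))"
proof -
  have eq: "{- int M..int M} - {0} = int ` {1..M} \<union> (\<lambda>l. - int l) ` {1..M}"
  proof (rule set_eqI, rule iffI)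
    fix x assume x: "x \<in> {- int M..int M} - {0}"
    show "x \<in> int ` {1..M} \<union> (\<lambda>l. - int l) ` {1..M}"
    proof (cases "x > 0")
      case True
      then have "x = int (nat x)" "nat x \<in> {1..M}" using x by auto
      then show ?thesis by blast
    next
      case False
      then have "x = - int (nat (- x))" "nat (- x) \<in> {1..M}" using x by auto
      then show ?thesis by blast
    qed
  qed auto
  have "(\<Sum>i\<in>{- int M..int M} - {0}. f i) = (\<Sum>i\<in>int ` {1..M}. f i) + (\<Sum>i\<in>(\<lambda>l. - int l) ` {1..M}. f i)"
    unfolding eq by (rule sum.union_disjoint) auto
  also have "\<dots> = (\<Sum>l=1..M. f (int l)) + (\<Sum>l=1..M. f (- int l))"
    by (subst sum.reindex, simp add: inj_on_def)+ simp
  finally show ?thesis .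
qed

lemma Bg_rec_pos:
  assumes M: "M \<ge> 1" and j: "1 \<le> j" "j \<le> Suc M"
  shows "Bg (Suc M) (int j) = (\<Sum>l=1..M. monom 1 (if l < j then 1 else 0) * Bg M (int l))
     + (\<Sum>l=1..M. Bg M (- int l))"
proof -
  have "Bg (Suc M) (int j) = (\<Sum>i\<in>{- int M..int M} - {0}. monom 1 (dd (int j) i) * Bg M i)"
    using Bg_rec[OF M, of "int j"] j by simp
  also have "\<dots> = (\<Sum>l=1..M. monom 1 (dd (int j) (int l)) * Bg M (int l)) + (\<Sum>l=1..M. monom 1 (dd (int j) (- int l)) * Bg M (- int l))"
    by (rule sum_nonzero_split)
  also have "\<dots> = (\<Sum>l=1..M. monom 1 (if l < j then 1 else 0) * Bg M (int l)) + (\<Sum>l=1..M. Bg M (- int l))"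
    using j by (intro arg_cong2[where f="(+)"] sum.cong) (auto simp: dd_def one_pCons)
  finally show ?thesis .
qed

lemma Bg_rec_neg:
  assumes M: "M \<ge> 1" and k: "1 \<le> k" "k \<le> Suc M"
  shows "Bg (Suc M) (- int k) = (\<Sum>l=1..M. monom 1 1 * Bg M (int l))
     + (\<Sum>l=1..M. monom 1 (if k \<le> l then 1 else 0) * Bg M (- int l))"
proof -
  have "Bg (Suc M) (- int k) = (\<Sum>i\<in>{- int M..int M} - {0}. monom 1 (dd (- int k) i) * Bg M i)"
    using Bg_rec[OF M, of "- int k"] k by simp
  also have "\<dots> = (\<Sum>l=1..M. monom 1 (dd (- int k) (int l)) * Bg M (int l)) + (\<Sum>l=1..M. monom 1 (dd (- int k) (- int l)) * Bg M (- int l))"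
    by (rule sum_nonzero_split)
  also have "\<dots> = (\<Sum>l=1..M. monom 1 1 * Bg M (int l)) + (\<Sum>l=1..M. monom 1 (if k \<le> l then 1 else 0) * Bg M (- int l))"
    using k by (intro arg_cong2[where f="(+)"] sum.cong) (auto simp: dd_def)
  finally show ?thesis .
qed

lemma SPj_1_1: "SPj 1 1 = {\<lambda>k. if k = 1 then 1 else 0}"
proof
  show "SPj 1 1 \<subseteq> {\<lambda>k. if k = 1 then 1 else 0}"
  proof
    fix \<sigma> assume s: "\<sigma> \<in> SPj 1 1"
    then have "\<sigma> \<in> signed_perms 1" "\<sigma> 1 = 1" by (auto simp: SPj_def)
    then have "\<sigma> = (\<lambda>k. if k = 1 then 1 else 0)" using sp_zero by fastforce
    then show "\<sigma> \<in> {\<lambda>k. if k = 1 then 1 else 0}" by simp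
  qed
next
  have "(\<lambda>k. if k = 1 then 1 else 0::int) \<in> signed_perms 1"
    by (rule sp_intro) auto
  then show "{\<lambda>k. if k = 1 then 1 else 0} \<subseteq> SPj 1 1" by (auto simp: SPj_def)
qed

lemma Bg_1_1: "Bg 1 1 = 1"
proof -
  have c: "card {i. i = (0::nat) \<and> 0 < i} = 0" by auto
  show ?thesis unfolding Bg_def SPj_1_1 by (simp add: desB_def c)
qed

lemma Bg_1_m1: "Bg 1 (-1) = 0"
proof -
  have "SPj 1 (-1) = {}" by (auto simp: SPj_def)
  then show ?thesis by (simp add: Bg_def)
qed


lemma geoS:
  fixes x y :: int
  assumes "1 \<le> j" "j \<le> Suc M"
  shows "(x - y) * (\<Sum>l=j..M. x^(M-l) * y^(l-1)) = y^(j-1) * x^(Suc M - j) - y^M"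
  using assms
proof (induction M)
  case 0
  then have "j = 1" by auto
  then show ?case by simp
next
  case (Suc M)
  show ?case
  proof (cases "j = Suc (Suc M)")
    case True
    then show ?thesis by simp
  next
    case False
    then have j: "j \<le> Suc M" using Suc.prems by auto
    have "(\<Sum>l=j..Suc M. x^(Suc M-l) * y^(l-1)) = (\<Sum>l=j..M. x^(Suc M-l) * y^(l-1)) + y^M"
      using j by (simp add: sum.cl_ivl_Suc)
    also have "(\<Sum>l=j..M. x^(Suc M-l) * y^(l-1)) = x * (\<Sum>l=j..M. x^(M-l) * y^(l-1))"
      unfolding sum_distrib_left by (rule sum.cong) (auto simp: Suc_diff_le)
    finally have e: "(\<Sum>l=j..Suc M. x^(Suc M-l) * y^(l-1)) = x * (\<Sum>l=j..M. x^(M-l) * y^(l-1)) + y^M" .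
    have IH: "(x - y) * (\<Sum>l=j..M. x^(M-l) * y^(l-1)) = y^(j-1) * x^(Suc M - j) - y^M"
      using Suc.IH Suc.prems j by simp
    have "(x - y) * (\<Sum>l=j..Suc M. x^(Suc M-l) * y^(l-1)) = x * ((x - y) * (\<Sum>l=j..M. x^(M-l) * y^(l-1))) + (x - y) * y^M"
      unfolding e by (simp add: algebra_simps)
    also have "\<dots> = y^(j-1) * (x * x^(Suc M - j)) - y^(Suc M)"
      unfolding IH by (simp add: algebra_simps)
    also have "x * x^(Suc M - j) = x^(Suc (Suc M) - j)" using j by (simp add: Suc_diff_le)
    finally show ?thesis .
  qed
qed

lemma geoP:
  fixes x y :: int
  assumes "1 \<le> k" "k \<le> Suc M"
  shows "(x - y) * (\<Sum>l\<in>{1..<k}. x^(M-l) * y^(l-1)) = x^M - x^(Suc M - k) * y^(k-1)"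
proof -
  have split: "{1..M} = {1..<k} \<union> {k..M}" using assms by auto
  have "(\<Sum>l=1..M. x^(M-l) * y^(l-1)) = (\<Sum>l\<in>{1..<k}. x^(M-l) * y^(l-1)) + (\<Sum>l=k..M. x^(M-l) * y^(l-1))"
    unfolding split by (rule sum.union_disjoint) auto
  moreover have "(x - y) * (\<Sum>l=1..M. x^(M-l) * y^(l-1)) = x^M - y^M"
    using geoS[of 1 M x y] by simp
  moreover have "(x - y) * (\<Sum>l=k..M. x^(M-l) * y^(l-1)) = y^(k-1) * x^(Suc M - k) - y^M"
    using geoS[OF assms] .
  ultimately show ?thesis by (simp add: algebra_simps)
qed

definition ap :: "nat \<Rightarrow> nat \<Rightarrow> nat \<Rightarrow> int" where
  "ap N j q = (if q = 0 then (if j = 1 then 1 else 0) else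
     (2 * int q + 1)^(N-j) * (2 * int q)^(j-1) - (2 * int q)^(N-j) * (2 * int q - 1)^(j-1))"

definition an :: "nat \<Rightarrow> nat \<Rightarrow> nat \<Rightarrow> int" where
  "an N k q = (if q = 0 then 0 else
     (2 * int q - 1)^(N-k) * (2 * int q)^(k-1) - (2 * int q - 2)^(N-k) * (2 * int q - 1)^(k-1))"

definition DD :: "nat \<Rightarrow> int \<Rightarrow> int" where
  "DD M x = x^M - (x - 1)^M"

lemma suffix_ap:
  assumes "q \<ge> 1" "1 \<le> j" "j \<le> Suc M"
  shows "(\<Sum>l=j..M. ap M l q) = (2*int q)^(j-1) * (2*int q+1)^(Suc M - j) - (2*int q)^M
      - ((2*int q - 1)^(j-1) * (2*int q)^(Suc M - j) - (2*int q - 1)^M)"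
proof -
  let ?A = "2*int q+1" and ?B = "2*int q" and ?C = "2*int q - 1"
  have "(\<Sum>l=j..M. ap M l q) = (\<Sum>l=j..M. ?A^(M-l) * ?B^(l-1)) - (\<Sum>l=j..M. ?B^(M-l) * ?C^(l-1))"
    unfolding sum_subtractf[symmetric] by (rule sum.cong) (use assms in \<open>auto simp: ap_def\<close>)
  also have "(\<Sum>l=j..M. ?A^(M-l) * ?B^(l-1)) = ?B^(j-1) * ?A^(Suc M - j) - ?B^M"
    using geoS[OF assms(2,3), of ?A ?B] by simp
  also have "(\<Sum>l=j..M. ?B^(M-l) * ?C^(l-1)) = ?C^(j-1) * ?B^(Suc M - j) - ?C^M"
    using geoS[OF assms(2,3), of ?B ?C] by simp
  finally show ?thesis .
qed

lemma prefix_an: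
  assumes "q \<ge> 1" "1 \<le> k" "k \<le> Suc M"
  shows "(\<Sum>l\<in>{1..<k}. an M l q) = ((2*int q - 1)^(Suc M - k) * (2*int q)^(k-1) - (2*int q - 1)^M)
      - ((2*int q - 2)^(Suc M - k) * (2*int q - 1)^(k-1) - (2*int q - 2)^M)"
proof -
  let ?B = "2*int q" and ?C = "2*int q - 1" and ?E = "2*int q - 2"
  have "(\<Sum>l\<in>{1..<k}. an M l q) = (\<Sum>l\<in>{1..<k}. ?C^(M-l) * ?B^(l-1)) - (\<Sum>l\<in>{1..<k}. ?E^(M-l) * ?C^(l-1))"
    unfolding sum_subtractf[symmetric] by (rule sum.cong) (use assms in \<open>auto simp: an_def\<close>)
  also have "(\<Sum>l\<in>{1..<k}. ?C^(M-l) * ?B^(l-1)) = ?C^(Suc M - k) * ?B^(k-1) - ?C^M"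
    using geoP[OF assms(2,3), of ?C ?B] by simp
  also have "(\<Sum>l\<in>{1..<k}. ?E^(M-l) * ?C^(l-1)) = ?E^(Suc M - k) * ?C^(k-1) - ?E^M"
    using geoP[OF assms(2,3), of ?E ?C] by simp
  finally show ?thesis .
qed

lemma Pos_formula:
  assumes "q \<ge> 1" "M \<ge> 1"
  shows "(\<Sum>l=1..M. ap M l q) = DD M (2*int q+1) - DD M (2*int q)"
  using suffix_ap[OF assms(1), of 1 M] by (simp add: DD_def)

lemma Pos_0: "M \<ge> 1 \<Longrightarrow> (\<Sum>l=1..M. ap M l 0) = 1"
proof -
  assume "M \<ge> 1"
  then have "(\<Sum>l=1..M. ap M l 0) = (\<Sum>l\<in>{1}. ap M l 0)"
    by (intro sum.mono_neutral_right) (auto simp: ap_def)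
  then show ?thesis by (simp add: ap_def)
qed

lemma Neg_formula:
  assumes "q \<ge> 1"
  shows "(\<Sum>l=1..M. an M l q) = DD M (2*int q) - DD M (2*int q - 1)"
proof -
  have "{1..M} = {1..<Suc M}" by auto
  then show ?thesis using prefix_an[OF assms, of "Suc M" M] by (simp add: DD_def algebra_simps)
qed

lemma Neg_0: "(\<Sum>l=1..M. an M l 0) = 0"
  by (simp add: an_def)

lemma cumul:
  assumes "M \<ge> 1"
  shows "(\<Sum>r<q. (\<Sum>l=1..M. ap M l r) + (\<Sum>l=1..M. an M l r)) = (if q = 0 then 0 else DD M (2*int q - 1))"
proof (induction q)
  case 0 then show ?case by simp
next
  case (Suc q)
  show ?case
  proof (cases "q = 0")
    case True
    then show ?thesis using Pos_0[OF assms] Neg_0 assms by (simp add: DD_def)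
  next
    case False
    then have "q \<ge> 1" by simp
    have "(\<Sum>r<Suc q. (\<Sum>l=1..M. ap M l r) + (\<Sum>l=1..M. an M l r)) =
      DD M (2*int q - 1) + (DD M (2*int q+1) - DD M (2*int q)) + (DD M (2*int q) - DD M (2*int q - 1))"
      using Suc.IH False Pos_formula[OF \<open>q \<ge> 1\<close> assms] Neg_formula[OF \<open>q \<ge> 1\<close>] by simp
    then show ?thesis by (simp add: algebra_simps)
  qed
qed

lemma sum_if_ge:
  fixes j M :: nat
  assumes "1 \<le> j"
  shows "(\<Sum>l=1..M. if j \<le> l then f l else 0) = (\<Sum>l=j..M. f l)"
proof -
  have "(\<Sum>l=1..M. if j \<le> l then f l else 0) = (\<Sum>l\<in>{l\<in>{1..M}. j \<le> l}. f l)"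
    by (rule sym, rule sum.inter_filter) simp
  also have "{l\<in>{1..M}. j \<le> l} = {j..M}" using assms by auto
  finally show ?thesis .
qed

lemma sum_if_lt:
  fixes k M :: nat
  assumes that: "k \<le> Suc M"
  shows "(\<Sum>l=1..M. if l < k then f l else 0) = (\<Sum>l\<in>{1..<k}. f l)"
proof -
  have "(\<Sum>l=1..M. if l < k then f l else 0) = (\<Sum>l\<in>{l\<in>{1..M}. l < k}. f l)"
    by (rule sym, rule sum.inter_filter) simp
  also have "{l\<in>{1..M}. l < k} = {1..<k}" using that by auto
  finally show ?thesis .
qed

lemma rec_ap:
  assumes M: "M \<ge> 1" and j: "1 \<le> j" "j \<le> Suc M"
  shows "ap (Suc M) j q = (\<Sum>l=1..M. \<Sum>r<q+1-(if l<j then 1 else 0). ap M l r) + (\<Sum>l=1..M. \<Sum>r<q+1. an M l r)"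
proof -
  have e1: "(\<Sum>r<q+1-(if l<j then 1 else 0). ap M l r) = (\<Sum>r<q. ap M l r) + (if j \<le> l then ap M l q else 0)" for l
    by (cases "l < j") auto
  have "(\<Sum>l=1..M. \<Sum>r<q+1-(if l<j then 1 else 0). ap M l r) + (\<Sum>l=1..M. \<Sum>r<q+1. an M l r)
     = (\<Sum>l=1..M. \<Sum>r<q. ap M l r) + (\<Sum>l=1..M. if j \<le> l then ap M l q else 0)
       + ((\<Sum>l=1..M. \<Sum>r<q. an M l r) + (\<Sum>l=1..M. an M l q))"
    unfolding e1 by (simp add: sum.distrib)
  also have "(\<Sum>l=1..M. \<Sum>r<q. ap M l r) + (\<Sum>l=1..M. \<Sum>r<q. an M l r)
      = (\<Sum>r<q. (\<Sum>l=1..M. ap M l r) + (\<Sum>l=1..M. an M l r))"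
  proof -
    have a: "(\<Sum>l=1..M. \<Sum>r<q. ap M l r) = (\<Sum>r<q. \<Sum>l=1..M. ap M l r)" by (rule sum.swap)
    have b: "(\<Sum>l=1..M. \<Sum>r<q. an M l r) = (\<Sum>r<q. \<Sum>l=1..M. an M l r)" by (rule sum.swap)
    show ?thesis unfolding a b by (simp add: sum.distrib)
  qed
  then have "(\<Sum>l=1..M. \<Sum>r<q. ap M l r) + (\<Sum>l=1..M. if j \<le> l then ap M l q else 0)
       + ((\<Sum>l=1..M. \<Sum>r<q. an M l r) + (\<Sum>l=1..M. an M l q))
      = (\<Sum>r<q. (\<Sum>l=1..M. ap M l r) + (\<Sum>l=1..M. an M l r)) + (\<Sum>l=j..M. ap M l q) + (\<Sum>l=1..M. an M l q)"
    using sum_if_ge[OF j(1), where M=M and f="\<lambda>l. ap M l q"] by simp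
  finally have R: "(\<Sum>l=1..M. \<Sum>r<q+1-(if l<j then 1 else 0). ap M l r) + (\<Sum>l=1..M. \<Sum>r<q+1. an M l r)
      = (if q = 0 then 0 else DD M (2*int q - 1)) + (\<Sum>l=j..M. ap M l q) + (\<Sum>l=1..M. an M l q)"
    unfolding cumul[OF M] .
  show ?thesis
  proof (cases "q = 0")
    case True
    have "(\<Sum>l=j..M. ap M l 0) = (if j = 1 then 1 else 0)"
    proof (cases "j = 1")
      case True
      then show ?thesis using Pos_0[OF M] by simp
    next
      case False
      then have "(\<Sum>l=j..M. ap M l 0) = 0" using j by (intro sum.neutral) (auto simp: ap_def)
      then show ?thesis using False by simp
    qed
    then show ?thesis unfolding R using True by (simp add: ap_def an_def)
  next
    case False
    then have q: "q \<ge> 1" by simp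
    show ?thesis unfolding R using False suffix_ap[OF q j] Neg_formula[OF q, of M]
      by (simp add: ap_def DD_def algebra_simps)
  qed
qed

lemma rec_an:
  assumes M: "M \<ge> 1" and k: "1 \<le> k" "k \<le> Suc M"
  shows "an (Suc M) k q = (\<Sum>l=1..M. \<Sum>r<q. ap M l r) + (\<Sum>l=1..M. \<Sum>r<q+1-(if k \<le> l then 1 else 0). an M l r)"
proof -
  have e1: "(\<Sum>r<q+1-(if k\<le>l then 1 else 0). an M l r) = (\<Sum>r<q. an M l r) + (if l < k then an M l q else 0)" for l
    by (cases "k \<le> l") auto
  have "(\<Sum>l=1..M. \<Sum>r<q. ap M l r) + (\<Sum>l=1..M. \<Sum>r<q+1-(if k \<le> l then 1 else 0). an M l r)
     = ((\<Sum>l=1..M. \<Sum>r<q. ap M l r) + (\<Sum>l=1..M. \<Sum>r<q. an M l r)) + (\<Sum>l=1..M. if l < k then an M l q else 0)"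
    unfolding e1 by (simp add: sum.distrib)
  also have "(\<Sum>l=1..M. \<Sum>r<q. ap M l r) + (\<Sum>l=1..M. \<Sum>r<q. an M l r)
      = (\<Sum>r<q. (\<Sum>l=1..M. ap M l r) + (\<Sum>l=1..M. an M l r))"
  proof -
    have a: "(\<Sum>l=1..M. \<Sum>r<q. ap M l r) = (\<Sum>r<q. \<Sum>l=1..M. ap M l r)" by (rule sum.swap)
    have b: "(\<Sum>l=1..M. \<Sum>r<q. an M l r) = (\<Sum>r<q. \<Sum>l=1..M. an M l r)" by (rule sum.swap)
    show ?thesis unfolding a b by (simp add: sum.distrib)
  qed
  also have "(\<Sum>l=1..M. if l < k then an M l q else 0) = (\<Sum>l\<in>{1..<k}. an M l q)"
    by (rule sum_if_lt[OF k(2)])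
  finally have R: "(\<Sum>l=1..M. \<Sum>r<q. ap M l r) + (\<Sum>l=1..M. \<Sum>r<q+1-(if k \<le> l then 1 else 0). an M l r)
      = (if q = 0 then 0 else DD M (2*int q - 1)) + (\<Sum>l\<in>{1..<k}. an M l q)"
    unfolding cumul[OF M] .
  show ?thesis
  proof (cases "q = 0")
    case True
    then show ?thesis unfolding R by (simp add: an_def)
  next
    case False
    then have q: "q \<ge> 1" by simp
    show ?thesis unfolding R using False prefix_an[OF q k]
      by (simp add: an_def DD_def algebra_simps)
  qed
qed

definition S1 :: "int fps" where "S1 = Abs_fps (\<lambda>_. 1)"

lemma mult_S1_nth: "(F * S1) $ q = (\<Sum>r<Suc q. F $ r)"
proof -
  have "(F * S1) $ q = (\<Sum>i=0..q. F $ i)" by (simp add: fps_mult_nth S1_def)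
  also have "{0..q} = {..<Suc q}" by auto
  finally show ?thesis .
qed

lemma XdS1: "(fps_X^d * (F * S1)) $ q = (\<Sum>r<q+1-d. F $ r)"
proof (cases "q < d")
  case True
  then have "q + 1 - d = 0" by simp
  then show ?thesis using True by (simp add: fps_X_power_mult_nth)
next
  case False
  then have "Suc (q - d) = q + 1 - d" by simp
  then show ?thesis using False by (simp add: fps_X_power_mult_nth mult_S1_nth)
qed

lemma XS1: "(fps_X * (F * S1)) $ q = (\<Sum>r<q. F $ r)"
  using XdS1[of 1 F q] by simp

definition tB :: "nat \<Rightarrow> int \<Rightarrow> int fps" where
  "tB N j = fps_of_poly (Bg N j) * S1 ^ (N - 1)"

lemma tB_rec_pos:
  assumes M: "M \<ge> 1" and j: "1 \<le> j" "j \<le> Suc M"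
  shows "tB (Suc M) (int j) $ q = (\<Sum>l=1..M. \<Sum>r<q+1-(if l<j then 1 else 0). tB M (int l) $ r)
     + (\<Sum>l=1..M. \<Sum>r<q+1. tB M (- int l) $ r)"
proof -
  have S: "S1 ^ (Suc M - 1) = S1 ^ (M - 1) * S1" using M by (cases M) (auto simp: mult.commute)
  have F: "fps_of_poly (Bg (Suc M) (int j)) = (\<Sum>l=1..M. fps_X ^ (if l<j then 1 else 0) * fps_of_poly (Bg M (int l)))
     + (\<Sum>l=1..M. fps_X ^ 0 * fps_of_poly (Bg M (- int l)))"
    unfolding Bg_rec_pos[OF M j] by (simp add: fps_of_poly_add fps_of_poly_sum fps_of_poly_mult fps_of_poly_monom')
  have "tB (Suc M) (int j) = (\<Sum>l=1..M. fps_X ^ (if l<j then 1 else 0) * (tB M (int l) * S1))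
     + (\<Sum>l=1..M. fps_X ^ 0 * (tB M (- int l) * S1))"
    unfolding tB_def S F distrib_right sum_distrib_right by (simp add: mult_ac)
  then show ?thesis by (simp add: fps_sum_nth XdS1 del: power_0)
qed

lemma tB_rec_neg:
  assumes M: "M \<ge> 1" and k: "1 \<le> k" "k \<le> Suc M"
  shows "tB (Suc M) (- int k) $ q = (\<Sum>l=1..M. \<Sum>r<q+1-1. tB M (int l) $ r)
     + (\<Sum>l=1..M. \<Sum>r<q+1-(if k \<le> l then 1 else 0). tB M (- int l) $ r)"
proof -
  have S: "S1 ^ (Suc M - 1) = S1 ^ (M - 1) * S1" using M by (cases M) (auto simp: mult.commute)
  have F: "fps_of_poly (Bg (Suc M) (- int k)) = (\<Sum>l=1..M. fps_X ^ 1 * fps_of_poly (Bg M (int l)))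
     + (\<Sum>l=1..M. fps_X ^ (if k \<le> l then 1 else 0) * fps_of_poly (Bg M (- int l)))"
    unfolding Bg_rec_neg[OF M k] by (simp add: fps_of_poly_add fps_of_poly_sum fps_of_poly_mult fps_of_poly_monom')
  have "tB (Suc M) (- int k) = (\<Sum>l=1..M. fps_X ^ 1 * (tB M (int l) * S1))
     + (\<Sum>l=1..M. fps_X ^ (if k \<le> l then 1 else 0) * (tB M (- int l) * S1))"
    unfolding tB_def S F distrib_right sum_distrib_right by (simp add: mult_ac)
  then show ?thesis by (simp add: fps_sum_nth XdS1 XS1 del: fps_X_mult_nth)
qed

lemma tB_closed:
  assumes "N \<ge> 1"
  shows "(\<forall>j\<in>{1..N}. \<forall>q. tB N (int j) $ q = ap N j q) \<and> (\<forall>k\<in>{1..N}. \<forall>q. tB N (- int k) $ q = an N k q)"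
  using assms
proof (induction N)
  case 0 then show ?case by simp
next
  case (Suc M)
  show ?case
  proof (cases "M = 0")
    case True
    have a: "tB 1 1 = 1" using Bg_1_1 by (simp add: tB_def)
    have b: "tB 1 (-1) = 0" using Bg_1_m1 by (simp add: tB_def)
    show ?thesis using True a b by (auto simp: ap_def an_def)
  next
    case False
    then have M: "M \<ge> 1" by simp
    note IH = Suc.IH[OF M]
    show ?thesis
    proof (intro conjI ballI allI)
      fix j q assume "j \<in> {1..Suc M}"
      then have j: "1 \<le> j" "j \<le> Suc M" by auto
      show "tB (Suc M) (int j) $ q = ap (Suc M) j q"
        unfolding tB_rec_pos[OF M j] rec_ap[OF M j] using IH by simp
    next
      fix k q assume "k \<in> {1..Suc M}"
      then have k: "1 \<le> k" "k \<le> Suc M" by auto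
      show "tB (Suc M) (- int k) $ q = an (Suc M) k q"
        unfolding tB_rec_neg[OF M k] rec_an[OF M k] using IH by simp
    qed
  qed
qed

lemma coeff_rec_pos:
  assumes M: "M \<ge> 1" and j: "1 \<le> j" "j \<le> Suc M"
  shows "coeff (Bg (Suc M) (int j)) r =
    (\<Sum>l=1..M. if (if l<j then 1 else 0) \<le> r then coeff (Bg M (int l)) (r - (if l<j then 1 else 0)) else 0)
    + (\<Sum>l=1..M. coeff (Bg M (- int l)) r)"
  unfolding Bg_rec_pos[OF M j] coeff_add coeff_sum coeff_monom_mult
  by (intro arg_cong2[where f="(+)"] sum.cong) auto

lemma coeff_rec_neg:
  assumes M: "M \<ge> 1" and k: "1 \<le> k" "k \<le> Suc M"
  shows "coeff (Bg (Suc M) (- int k)) r =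
    (\<Sum>l=1..M. if 1 \<le> r then coeff (Bg M (int l)) (r - 1) else 0)
    + (\<Sum>l=1..M. if (if k \<le> l then 1 else 0) \<le> r then coeff (Bg M (- int l)) (r - (if k \<le> l then 1 else 0)) else 0)"
  unfolding Bg_rec_neg[OF M k] coeff_add coeff_sum coeff_monom_mult
  by (intro arg_cong2[where f="(+)"] sum.cong) auto

lemma sum_rev1: "(\<Sum>l=1..M. g l) = (\<Sum>l=1..M. g (Suc M - l))"
  using sum.atLeastAtMost_rev[of g 1 M] by simp

definition PalP :: "nat \<Rightarrow> bool" where
  "PalP N \<longleftrightarrow> (\<forall>j\<in>{1..N}. \<forall>r. coeff (Bg N (int j)) r =
        (if r \<le> N - 1 then coeff (Bg N (int (Suc N - j))) (N - 1 - r) else 0))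
    \<and> (\<forall>k\<in>{1..N}. \<forall>r. coeff (Bg N (- int k)) r =
        (if r \<le> N then coeff (Bg N (- int (Suc N - k))) (N - r) else 0))"

lemma PalP_1: "PalP 1"
proof -
  have a: "Bg 1 1 = 1" by (rule Bg_1_1)
  have b: "Bg 1 (-1) = 0" by (rule Bg_1_m1)
  show ?thesis unfolding PalP_def using a b by (auto simp: coeff_1)
qed

lemma PalP_step:
  assumes M: "M \<ge> 1" and IH: "PalP M"
  shows "PalP (Suc M)"
proof -
  have IHp: "coeff (Bg M (int l)) s = (if s \<le> M - 1 then coeff (Bg M (int (Suc M - l))) (M - 1 - s) else 0)"
    if "l \<in> {1..M}" for l s using IH that unfolding PalP_def by blast
  have IHn: "coeff (Bg M (- int l)) s = (if s \<le> M then coeff (Bg M (- int (Suc M - l))) (M - s) else 0)"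
    if "l \<in> {1..M}" for l s using IH that unfolding PalP_def by blast
  have zp: "coeff (Bg M (int l)) s = 0" if "l \<in> {1..M}" "s \<ge> M" for l s
    using IHp[OF that(1), of s] that M by auto
  have zn: "coeff (Bg M (- int l)) s = 0" if "l \<in> {1..M}" "s > M" for l s
    using IHn[OF that(1), of s] that by auto
  have pos: "coeff (Bg (Suc M) (int j)) r =
        (if r \<le> Suc M - 1 then coeff (Bg (Suc M) (int (Suc (Suc M) - j))) (Suc M - 1 - r) else 0)"
    if j: "1 \<le> j" "j \<le> Suc M" for j r
  proof -
    have j': "1 \<le> Suc (Suc M) - j" "Suc (Suc M) - j \<le> Suc M" using j by auto
    show ?thesis
    proof (cases "r \<le> M")
      case False
      have a: "(\<Sum>l=1..M. if (if l<j then 1 else 0) \<le> r then coeff (Bg M (int l)) (r - (if l<j then 1 else 0)) else 0) = 0"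
        using False by (intro sum.neutral ballI) (auto intro!: zp)
      have b: "(\<Sum>l=1..M. coeff (Bg M (- int l)) r) = 0"
        using False by (intro sum.neutral ballI) (auto intro!: zn)
      have "coeff (Bg (Suc M) (int j)) r = 0"
        unfolding coeff_rec_pos[OF M j] a b by simp
      then show ?thesis using False by simp
    next
      case True
      have N: "(\<Sum>l=1..M. coeff (Bg M (- int l)) r) = (\<Sum>l=1..M. coeff (Bg M (- int l)) (M - r))"
      proof -
        have "(\<Sum>l=1..M. coeff (Bg M (- int l)) r) = (\<Sum>l=1..M. coeff (Bg M (- int (Suc M - l))) (M - r))"
          using True by (intro sum.cong) (auto simp: IHn)
        also have "\<dots> = (\<Sum>l=1..M. coeff (Bg M (- int l)) (M - r))"
          by (rule sum_rev1[symmetric])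
        finally show ?thesis .
      qed
      have P: "(\<Sum>l=1..M. if (if l<j then 1 else 0) \<le> r then coeff (Bg M (int l)) (r - (if l<j then 1 else 0)) else 0)
          = (\<Sum>l=1..M. if (if l < Suc (Suc M) - j then 1 else 0) \<le> M - r then
               coeff (Bg M (int l)) (M - r - (if l < Suc (Suc M) - j then 1 else 0)) else 0)"
      proof -
        have "(\<Sum>l=1..M. if (if l<j then 1 else 0) \<le> r then coeff (Bg M (int l)) (r - (if l<j then 1 else 0)) else 0)
          = (\<Sum>l=1..M. if (if Suc M - l<j then 1 else 0) \<le> r then coeff (Bg M (int (Suc M - l))) (r - (if Suc M - l<j then 1 else 0)) else 0)"
          by (rule sum_rev1)
        also have "\<dots> = (\<Sum>l=1..M. if (if l < Suc (Suc M) - j then 1 else 0) \<le> M - r then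
               coeff (Bg M (int l)) (M - r - (if l < Suc (Suc M) - j then 1 else 0)) else 0)"
        proof (rule sum.cong)
          fix l assume l: "l \<in> {1..M}"
          have l': "Suc M - l \<in> {1..M}" using l by auto
          have inv: "Suc M - (Suc M - l) = l" using l by auto
          show "(if (if Suc M - l<j then 1 else 0) \<le> r then coeff (Bg M (int (Suc M - l))) (r - (if Suc M - l<j then 1 else 0)) else 0)
              = (if (if l < Suc (Suc M) - j then 1 else 0) \<le> M - r then
               coeff (Bg M (int l)) (M - r - (if l < Suc (Suc M) - j then 1 else 0)) else 0)"
          proof (cases "l < Suc (Suc M) - j")
            case True
            then have "\<not> Suc M - l < j" using j l by auto
            show ?thesis
            proof (cases "r = M")
              case True
              then show ?thesis using \<open>l < Suc (Suc M) - j\<close> \<open>\<not> Suc M - l < j\<close> zp[OF l', of r] by simp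
            next
              case False
              then show ?thesis using \<open>l < Suc (Suc M) - j\<close> \<open>\<not> Suc M - l < j\<close> IHp[OF l', of r] inv \<open>r \<le> M\<close>
                by (auto simp: diff_diff_add)
            qed
          next
            case False
            then have "Suc M - l < j" using j l by auto
            show ?thesis
            proof (cases "r = 0")
              case True
              then show ?thesis using \<open>Suc M - l < j\<close> False zp[OF l, of "M - r"] by simp
            next
              case r0: False
              have "coeff (Bg M (int (Suc M - l))) (r - 1) = coeff (Bg M (int (Suc M - (Suc M - l)))) (M - 1 - (r - 1))"
              proof -
                have c: "r - 1 \<le> M - 1" using \<open>r \<le> M\<close> by simp
                show ?thesis using IHp[OF l', of "r - 1"] unfolding if_P[OF c] .
              qed
              also have "M - 1 - (r - 1) = M - r" using r0 \<open>r \<le> M\<close> by simp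
              finally have h: "coeff (Bg M (int (Suc M - l))) (r - 1) = coeff (Bg M (int l)) (M - r)" unfolding inv .
              show ?thesis using \<open>Suc M - l < j\<close> False r0 h by simp
            qed
          qed
        qed simp
        finally show ?thesis .
      qed
      have e: "Suc M - 1 - r = M - r" by simp
      show ?thesis unfolding coeff_rec_pos[OF M j] coeff_rec_pos[OF M j'] e N P using True by simp
    qed
  qed
  have neg: "coeff (Bg (Suc M) (- int k)) r =
        (if r \<le> Suc M then coeff (Bg (Suc M) (- int (Suc (Suc M) - k))) (Suc M - r) else 0)"
    if k: "1 \<le> k" "k \<le> Suc M" for k r
  proof -
    have k': "1 \<le> Suc (Suc M) - k" "Suc (Suc M) - k \<le> Suc M" using k by auto
    show ?thesis
    proof (cases "r \<le> Suc M")
      case False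
      have a: "(\<Sum>l=1..M. if 1 \<le> r then coeff (Bg M (int l)) (r - 1) else 0) = 0"
        using False by (intro sum.neutral ballI) (auto intro!: zp)
      have b: "(\<Sum>l=1..M. if (if k \<le> l then 1 else 0) \<le> r then coeff (Bg M (- int l)) (r - (if k \<le> l then 1 else 0)) else 0) = 0"
        using False by (intro sum.neutral ballI) (auto intro!: zn)
      have "coeff (Bg (Suc M) (- int k)) r = 0"
        unfolding coeff_rec_neg[OF M k] a b by simp
      then show ?thesis using False by simp
    next
      case True
      have Po: "(\<Sum>l=1..M. if 1 \<le> r then coeff (Bg M (int l)) (r - 1) else 0)
          = (\<Sum>l=1..M. if 1 \<le> Suc M - r then coeff (Bg M (int l)) (Suc M - r - 1) else 0)"
      proof -
        have "(\<Sum>l=1..M. if 1 \<le> r then coeff (Bg M (int l)) (r - 1) else 0)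
            = (\<Sum>l=1..M. if 1 \<le> r then coeff (Bg M (int (Suc M - l))) (r - 1) else 0)"
          by (rule sum_rev1)
        also have "\<dots> = (\<Sum>l=1..M. if 1 \<le> Suc M - r then coeff (Bg M (int l)) (Suc M - r - 1) else 0)"
        proof (rule sum.cong)
          fix l assume l: "l \<in> {1..M}"
          have l': "Suc M - l \<in> {1..M}" using l by auto
          have inv: "Suc M - (Suc M - l) = l" using l by auto
          show "(if 1 \<le> r then coeff (Bg M (int (Suc M - l))) (r - 1) else 0)
              = (if 1 \<le> Suc M - r then coeff (Bg M (int l)) (Suc M - r - 1) else 0)"
          proof (cases "r = 0")
            case True then show ?thesis using zp[OF l, of M] by simp
          next
            case r0: False
            show ?thesis
            proof (cases "r = Suc M")
              case True then show ?thesis using zp[OF l', of M] by simp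
            next
              case False
              have c: "r - 1 \<le> M - 1" using \<open>r \<le> Suc M\<close> False by simp
              have "coeff (Bg M (int (Suc M - l))) (r - 1) = coeff (Bg M (int (Suc M - (Suc M - l)))) (M - 1 - (r - 1))"
                using IHp[OF l', of "r - 1"] unfolding if_P[OF c] .
              also have "M - 1 - (r - 1) = Suc M - r - 1" using r0 by simp
              finally show ?thesis unfolding inv using r0 False \<open>r \<le> Suc M\<close> by simp
            qed
          qed
        qed simp
        finally show ?thesis .
      qed
      have Ne: "(\<Sum>l=1..M. if (if k \<le> l then 1 else 0) \<le> r then coeff (Bg M (- int l)) (r - (if k \<le> l then 1 else 0)) else 0)
          = (\<Sum>l=1..M. if (if Suc (Suc M) - k \<le> l then 1 else 0) \<le> Suc M - r then
               coeff (Bg M (- int l)) (Suc M - r - (if Suc (Suc M) - k \<le> l then 1 else 0)) else 0)"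
      proof -
        have "(\<Sum>l=1..M. if (if k \<le> l then 1 else 0) \<le> r then coeff (Bg M (- int l)) (r - (if k \<le> l then 1 else 0)) else 0)
          = (\<Sum>l=1..M. if (if k \<le> Suc M - l then 1 else 0) \<le> r then coeff (Bg M (- int (Suc M - l))) (r - (if k \<le> Suc M - l then 1 else 0)) else 0)"
          by (rule sum_rev1)
        also have "\<dots> = (\<Sum>l=1..M. if (if Suc (Suc M) - k \<le> l then 1 else 0) \<le> Suc M - r then
               coeff (Bg M (- int l)) (Suc M - r - (if Suc (Suc M) - k \<le> l then 1 else 0)) else 0)"
        proof (rule sum.cong)
          fix l assume l: "l \<in> {1..M}"
          have l': "Suc M - l \<in> {1..M}" using l by auto
          have inv: "Suc M - (Suc M - l) = l" using l by auto
          show "(if (if k \<le> Suc M - l then 1 else 0) \<le> r then coeff (Bg M (- int (Suc M - l))) (r - (if k \<le> Suc M - l then 1 else 0)) else 0)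
              = (if (if Suc (Suc M) - k \<le> l then 1 else 0) \<le> Suc M - r then
               coeff (Bg M (- int l)) (Suc M - r - (if Suc (Suc M) - k \<le> l then 1 else 0)) else 0)"
          proof (cases "Suc (Suc M) - k \<le> l")
            case True
            then have "\<not> k \<le> Suc M - l" using k l by auto
            then show ?thesis using True IHn[OF l', of r] inv True \<open>r \<le> Suc M\<close> zn[OF l, of "Suc M - r"]
              by (cases "r = Suc M") (auto simp: diff_diff_add)
          next
            case False
            then have "k \<le> Suc M - l" using k l by auto
            then show ?thesis using False IHn[OF l', of "r - 1"] inv zn[OF l, of "Suc M"] \<open>r \<le> Suc M\<close>
              by (cases "r = 0") (auto simp: diff_diff_add)
          qed
        qed simp
        finally show ?thesis .
      qed
      show ?thesis unfolding coeff_rec_neg[OF M k] coeff_rec_neg[OF M k'] Po Ne using True by simp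
    qed
  qed
  show ?thesis unfolding PalP_def using pos neg by auto
qed

lemma PalP_all: "N \<ge> 1 \<Longrightarrow> PalP N"
proof (induction N)
  case 0 then show ?case by simp
next
  case (Suc M)
  then show ?case using PalP_1 PalP_step by (cases "M = 0") auto
qed


definition belowP :: "'b set \<Rightarrow> ('b \<Rightarrow> 'b \<Rightarrow> bool) \<Rightarrow> 'b \<Rightarrow> 'b set" where
  "belowP P le x = {y \<in> P. le y x \<and> y \<noteq> x}"

locale porder =
  fixes le :: "'b \<Rightarrow> 'b \<Rightarrow> bool"
  assumes refl: "le x x"
    and antisym: "le x y \<Longrightarrow> le y x \<Longrightarrow> x = y"
    and trans: "le x y \<Longrightarrow> le y z \<Longrightarrow> le x z"
begin

lemma chain_max:
  assumes "finite C" "C \<noteq> {}" "\<forall>x\<in>C. \<forall>y\<in>C. le x y \<or> le y x"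
  shows "\<exists>m\<in>C. \<forall>y\<in>C. le y m"
  using assms
proof (induction C rule: finite_ne_induct)
  case (singleton x) then show ?case by (auto simp: refl)
next
  case (insert a F)
  then obtain m where m: "m \<in> F" "\<forall>y\<in>F. le y m" by auto
  have "le a m \<or> le m a" using insert.prems m(1) by auto
  then show ?case
  proof
    assume "le a m" then show ?thesis using m by auto
  next
    assume "le m a" then show ?thesis using m trans refl by blast
  qed
qed

lemma below_below:
  assumes "y \<in> belowP P le x"
  shows "belowP (belowP P le x) le y = belowP P le y"
  using assms unfolding belowP_def by (auto dest: trans antisym)

lemma chain_sum:
  fixes Y :: "'r :: comm_ring_1"
  assumes fin: "finite P"
  shows "(\<Sum>C\<in>order_complex P le. Y ^ card C) = 1 + (\<Sum>x\<in>P. Y * (\<Sum>C\<in>order_complex (belowP P le x) le. Y ^ card C))"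
proof -
  define OC where "OC = order_complex P le"
  define ismax where "ismax x C \<longleftrightarrow> x \<in> C \<and> (\<forall>y\<in>C. le y x)" for x C
  have finOC: "finite OC" unfolding OC_def order_complex_def
    by (rule finite_subset[of _ "Pow P"]) (use fin in auto)
  have emp: "{} \<in> OC" by (simp add: OC_def order_complex_def)
  let ?NE = "OC - {{}}"
  have "(\<Sum>C\<in>OC. Y ^ card C) = Y ^ card {} + (\<Sum>C\<in>?NE. Y ^ card C)"
    using emp finOC by (simp add: sum.remove)
  also have "(\<Sum>C\<in>?NE. Y ^ card C) = (\<Sum>C\<in>?NE. \<Sum>x\<in>P. if ismax x C then Y ^ card C else 0)"
  proof (rule sum.cong)
    fix C assume C: "C \<in> ?NE"
    then have Cc: "finite C" "C \<noteq> {}" "\<forall>x\<in>C. \<forall>y\<in>C. le x y \<or> le y x" "C \<subseteq> P"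
      by (auto simp: OC_def order_complex_def)
    obtain m where m: "m \<in> C" "\<forall>y\<in>C. le y m" using chain_max[OF Cc(1-3)] by auto
    have "{x \<in> P. ismax x C} = {m}" using m Cc(4) antisym unfolding ismax_def by auto
    then have "(\<Sum>x\<in>P. if ismax x C then Y ^ card C else 0) = (\<Sum>x\<in>{m}. Y ^ card C)"
      using fin by (simp add: sum.inter_filter[symmetric])
    then show "Y ^ card C = (\<Sum>x\<in>P. if ismax x C then Y ^ card C else 0)" by simp
  qed simp
  also have "\<dots> = (\<Sum>x\<in>P. \<Sum>C\<in>?NE. if ismax x C then Y ^ card C else 0)"
    by (rule sum.swap)
  also have "\<dots> = (\<Sum>x\<in>P. Y * (\<Sum>C\<in>order_complex (belowP P le x) le. Y ^ card C))"
  proof (rule sum.cong)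
    fix x assume x: "x \<in> P"
    have "(\<Sum>C\<in>?NE. if ismax x C then Y ^ card C else 0) = (\<Sum>C\<in>{C\<in>?NE. ismax x C}. Y ^ card C)"
      by (rule sum.inter_filter[symmetric]) (simp add: finOC)
    also have "{C\<in>?NE. ismax x C} = insert x ` order_complex (belowP P le x) le"
    proof
      show "{C\<in>?NE. ismax x C} \<subseteq> insert x ` order_complex (belowP P le x) le"
      proof
        fix C assume C: "C \<in> {C\<in>?NE. ismax x C}"
        then have Cc: "finite C" "\<forall>a\<in>C. \<forall>b\<in>C. le a b \<or> le b a" "C \<subseteq> P" "x \<in> C" "\<forall>y\<in>C. le y x"
          by (auto simp: OC_def order_complex_def ismax_def)
        have "C - {x} \<in> order_complex (belowP P le x) le"
          using Cc unfolding order_complex_def belowP_def by auto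
        moreover have "C = insert x (C - {x})" using Cc by auto
        ultimately show "C \<in> insert x ` order_complex (belowP P le x) le" by blast
      qed
    next
      show "insert x ` order_complex (belowP P le x) le \<subseteq> {C\<in>?NE. ismax x C}"
      proof
        fix C assume "C \<in> insert x ` order_complex (belowP P le x) le"
        then obtain C' where C': "C' \<in> order_complex (belowP P le x) le" "C = insert x C'" by auto
        then have "C' \<subseteq> P" "finite C'" "\<forall>a\<in>C'. \<forall>b\<in>C'. le a b \<or> le b a" "\<forall>y\<in>C'. le y x"
          by (auto simp: order_complex_def belowP_def)
        then show "C \<in> {C\<in>?NE. ismax x C}" using C'(2) x refl
          by (auto simp: OC_def order_complex_def ismax_def)
      qed
    qed
    also have "(\<Sum>C\<in>insert x ` order_complex (belowP P le x) le. Y ^ card C)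
        = (\<Sum>C\<in>order_complex (belowP P le x) le. Y ^ card (insert x C))"
    proof (rule sum.reindex[unfolded comp_def])
      show "inj_on (insert x) (order_complex (belowP P le x) le)"
        unfolding inj_on_def order_complex_def belowP_def by blast
    qed
    also have "\<dots> = (\<Sum>C\<in>order_complex (belowP P le x) le. Y * Y ^ card C)"
    proof (rule sum.cong)
      fix C assume "C \<in> order_complex (belowP P le x) le"
      then have "finite C" "x \<notin> C" by (auto simp: order_complex_def belowP_def)
      then show "Y ^ card (insert x C) = Y * Y ^ card C" by simp
    qed simp
    finally show "(\<Sum>C\<in>?NE. if ismax x C then Y ^ card C else 0) = Y * (\<Sum>C\<in>order_complex (belowP P le x) le. Y ^ card C)"
      by (simp add: sum_distrib_left)
  qed simp
  finally show ?thesis by (simp add: OC_def)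
qed

end

lemma sum_pow_subsets:
  fixes c :: "'r :: comm_semiring_1"
  assumes "finite V"
  shows "(\<Sum>U\<in>Pow V. c ^ card (V - U)) = (1 + c) ^ card V"
  using prod_add[OF assms, of "\<lambda>_. 1" "\<lambda>_. c"] by simp

lemma sum_pairs:
  fixes c :: "'r :: comm_semiring_1"
  assumes "finite S"
  shows "(\<Sum>(U,V)\<in>{(U,V). U \<subseteq> V \<and> V \<subseteq> S}. c ^ card (V - U)) = (2 + c) ^ card S"
proof -
  have fin: "finite (Pow V)" if "V \<in> Pow S" for V using assms that finite_subset by auto
  have "{(U,V). U \<subseteq> V \<and> V \<subseteq> S} = (\<lambda>(V,U). (U,V)) ` Sigma (Pow S) (\<lambda>V. Pow V)" by auto
  then have "(\<Sum>(U,V)\<in>{(U,V). U \<subseteq> V \<and> V \<subseteq> S}. c ^ card (V - U)) = (\<Sum>(V,U)\<in>Sigma (Pow S) (\<lambda>V. Pow V). c ^ card (V - U))"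
    by (simp add: sum.reindex inj_on_def case_prod_beta)
  also have "\<dots> = (\<Sum>V\<in>Pow S. \<Sum>U\<in>Pow V. c ^ card (V - U))"
    by (rule sum.Sigma[symmetric]) (use assms fin in auto)
  also have "\<dots> = (\<Sum>V\<in>Pow S. (1 + c) ^ card V)"
    by (rule sum.cong) (use assms finite_subset in \<open>auto intro!: sum_pow_subsets\<close>)
  also have "\<dots> = (\<Sum>V\<in>Pow S. (1 + c) ^ card V * 1 ^ card (S - V))" by simp
  also have "\<dots> = (1 + c + 1) ^ card S" using prod_add[OF assms, of "\<lambda>_. 1 + c" "\<lambda>_. 1"] by simp
  also have "(1 + c + 1) = (2 + c)" by (metis add.commute add.left_commute one_add_one)
  finally show ?thesis .
qed


interpretation ip: porder int_le
  by unfold_locales (auto simp: int_le_def)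

definition YY :: "int fps" where "YY = fps_X * S1"
definition GG :: "nat \<Rightarrow> int fps" where "GG s = Abs_fps (\<lambda>q. (2 * int q + 1) ^ s)"
definition G3 :: "nat \<Rightarrow> int fps" where "G3 s = Abs_fps (\<lambda>q. (2 * int q + 3) ^ s)"

lemma S1_inv: "(1 - fps_X) * S1 = 1"
proof (rule fps_ext)
  fix n
  show "((1 - fps_X) * S1) $ n = (1 :: int fps) $ n"
    by (cases n) (auto simp: S1_def algebra_simps fps_mult_nth)
qed

lemma YY_1X: "YY * (1 - fps_X) = fps_X"
  using S1_inv by (simp add: YY_def mult_ac)

lemma X_G3: "fps_X * G3 s = GG s - 1"
proof (rule fps_ext)
  fix n
  show "(fps_X * G3 s) $ n = (GG s - 1) $ n"
    by (cases n) (auto simp: G3_def GG_def algebra_simps)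
qed

definition Sub :: "'a set \<Rightarrow> 'a set \<Rightarrow> ('a set \<times> 'a set) set" where
  "Sub A B = {(A', B'). A \<subseteq> A' \<and> A' \<subseteq> B' \<and> B' \<subseteq> B}"

lemma Sub_sum:
  fixes c :: "'r :: comm_semiring_1"
  assumes "finite B" "A \<subseteq> B"
  shows "(\<Sum>(A',B')\<in>Sub A B. c ^ card (B' - A')) = (2 + c) ^ card (B - A)"
proof -
  let ?S = "B - A"
  let ?f = "\<lambda>(U,V). (A \<union> U, A \<union> V)"
  have img: "Sub A B = ?f ` {(U,V). U \<subseteq> V \<and> V \<subseteq> ?S}"
  proof (rule set_eqI, rule iffI)
    fix p assume "p \<in> Sub A B"
    then obtain A' B' where p: "p = (A', B')" "A \<subseteq> A'" "A' \<subseteq> B'" "B' \<subseteq> B" by (auto simp: Sub_def)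
    then have "(A' - A, B' - A) \<in> {(U,V). U \<subseteq> V \<and> V \<subseteq> ?S}" "p = ?f (A' - A, B' - A)" by auto
    then show "p \<in> ?f ` {(U,V). U \<subseteq> V \<and> V \<subseteq> ?S}" by blast
  next
    fix p assume "p \<in> ?f ` {(U,V). U \<subseteq> V \<and> V \<subseteq> ?S}"
    then show "p \<in> Sub A B" using assms by (auto simp: Sub_def)
  qed
  have inj: "inj_on ?f {(U,V). U \<subseteq> V \<and> V \<subseteq> ?S}"
    by (rule inj_onI) (auto simp: set_eq_iff)
  have "(\<Sum>(A',B')\<in>Sub A B. c ^ card (B' - A')) = (\<Sum>(U,V)\<in>{(U,V). U \<subseteq> V \<and> V \<subseteq> ?S}. c ^ card ((A \<union> V) - (A \<union> U)))"
    unfolding img by (subst sum.reindex[OF inj]) (simp add: case_prod_beta)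
  also have "\<dots> = (\<Sum>(U,V)\<in>{(U,V). U \<subseteq> V \<and> V \<subseteq> ?S}. c ^ card (V - U))"
  proof (rule sum.cong)
    fix p assume "p \<in> {(U,V). U \<subseteq> V \<and> V \<subseteq> ?S}"
    then obtain U V where "p = (U,V)" "U \<subseteq> V" "V \<subseteq> ?S" by auto
    moreover then have "(A \<union> V) - (A \<union> U) = V - U" by auto
    ultimately show "(case p of (U, V) \<Rightarrow> c ^ card (A \<union> V - (A \<union> U))) = (case p of (U, V) \<Rightarrow> c ^ card (V - U))" by simp
  qed simp
  also have "\<dots> = (2 + c) ^ card ?S" using sum_pairs[of ?S c] assms by simp
  finally show ?thesis .
qed

lemma finite_Sub: "finite B \<Longrightarrow> finite (Sub A B)"
  by (rule finite_subset[of _ "Pow B \<times> Pow B"]) (auto simp: Sub_def)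

lemma sc_finite_face: "simplicial_complex K \<Longrightarrow> B \<in> K \<Longrightarrow> finite B"
  by (auto simp: simplicial_complex_def)

lemma sc_sub_face: "simplicial_complex K \<Longrightarrow> B \<in> K \<Longrightarrow> B' \<subseteq> B \<Longrightarrow> B' \<in> K"
  by (auto simp: simplicial_complex_def)

lemma below_int:
  assumes K: "simplicial_complex K" and x: "(A,B) \<in> int_poset K"
  shows "belowP (int_poset K) int_le (A,B) = Sub A B - {(A,B)}"
  using x sc_sub_face[OF K] unfolding belowP_def Sub_def int_poset_def int_le_def by auto

lemma E_formula:
  assumes K: "simplicial_complex K" and x: "(A,B) \<in> int_poset K"
  shows "(\<Sum>C\<in>order_complex (belowP (int_poset K) int_le (A,B)) int_le. YY ^ card C) = (1 - fps_X) * GG (card (B - A))"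
  using x
proof (induction "card (B - A)" arbitrary: A B rule: less_induct)
  case less
  let ?P = "int_poset K"
  let ?D = "belowP ?P int_le (A,B)"
  have AB: "A \<subseteq> B" "B \<in> K" using less.prems by (auto simp: int_poset_def)
  have finB: "finite B" using sc_finite_face[OF K AB(2)] .
  have D: "?D = Sub A B - {(A,B)}" by (rule below_int[OF K less.prems])
  have finD: "finite ?D" unfolding D using finite_Sub[OF finB] by simp
  have xS: "(A,B) \<in> Sub A B" using AB by (simp add: Sub_def)
  have "(\<Sum>C\<in>order_complex ?D int_le. YY ^ card C) = 1 + (\<Sum>y\<in>?D. YY * (\<Sum>C\<in>order_complex (belowP ?D int_le y) int_le. YY ^ card C))"
    by (rule ip.chain_sum[OF finD])
  also have "(\<Sum>y\<in>?D. YY * (\<Sum>C\<in>order_complex (belowP ?D int_le y) int_le. YY ^ card C))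
      = (\<Sum>y\<in>?D. fps_X * GG (card (snd y - fst y)))"
  proof (rule sum.cong)
    fix y assume y: "y \<in> ?D"
    obtain A' B' where yy: "y = (A', B')" by (cases y)
    have yP: "(A', B') \<in> ?P" using y yy by (auto simp: belowP_def)
    have sub: "A \<subseteq> A'" "A' \<subseteq> B'" "B' \<subseteq> B" "(A',B') \<noteq> (A,B)" using y yy unfolding D Sub_def by auto
    have "B' - A' \<subset> B - A"
    proof -
      have "B' - A' \<subseteq> B - A" using sub by auto
      moreover have "B' - A' \<noteq> B - A"
      proof
        assume e: "B' - A' = B - A"
        then have "B' = B" using sub by auto
        moreover have "A' = A" using sub e by auto
        ultimately show False using sub by simp
      qed
      ultimately show ?thesis by auto
    qed
    then have lt: "card (B' - A') < card (B - A)" using finB by (meson finite_Diff psubset_card_mono)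
    have "(\<Sum>C\<in>order_complex (belowP ?D int_le y) int_le. YY ^ card C)
        = (\<Sum>C\<in>order_complex (belowP ?P int_le (A',B')) int_le. YY ^ card C)"
      using ip.below_below[OF y] yy by simp
    also have "\<dots> = (1 - fps_X) * GG (card (B' - A'))"
      by (rule less.hyps[OF lt yP])
    finally show "YY * (\<Sum>C\<in>order_complex (belowP ?D int_le y) int_le. YY ^ card C) = fps_X * GG (card (snd y - fst y))"
      using YY_1X yy by (simp add: mult.assoc[symmetric])
  qed simp
  also have "(\<Sum>y\<in>?D. fps_X * GG (card (snd y - fst y))) = fps_X * ((\<Sum>y\<in>Sub A B. GG (card (snd y - fst y))) - GG (card (B - A)))"
    unfolding D sum_distrib_left[symmetric] using finite_Sub[OF finB] xS by (simp add: sum_diff1)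
  also have "(\<Sum>y\<in>Sub A B. GG (card (snd y - fst y))) = G3 (card (B - A))"
  proof (rule fps_ext)
    fix q
    have "(\<Sum>y\<in>Sub A B. GG (card (snd y - fst y))) $ q = (\<Sum>(A',B')\<in>Sub A B. (2 * int q + 1) ^ card (B' - A'))"
      by (simp add: fps_sum_nth GG_def case_prod_beta)
    also have "\<dots> = (2 + (2 * int q + 1)) ^ card (B - A)" by (rule Sub_sum[OF finB AB(1)])
    finally show "(\<Sum>y\<in>Sub A B. GG (card (snd y - fst y))) $ q = G3 (card (B - A)) $ q"
      by (simp add: G3_def add_ac)
  qed
  finally show ?case using X_G3 by (simp add: algebra_simps)
qed

lemma Int_chain_sum:
  assumes K: "simplicial_complex K"
  shows "(\<Sum>C\<in>Int_complex K. YY ^ card C) = 1 + fps_X * Abs_fps (\<lambda>q. \<Sum>B\<in>K. (2 * int q + 2) ^ card B - (2 * int q + 1) ^ card B)"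
proof -
  let ?P = "int_poset K"
  have finK: "finite K" using K by (simp add: simplicial_complex_def)
  have Pimg: "?P = (\<lambda>(B,A). (A,B)) ` Sigma K (\<lambda>B. Pow B - {{}})"
    unfolding int_poset_def by auto
  have finP: "finite ?P" unfolding Pimg using finK sc_finite_face[OF K] by auto
  have "(\<Sum>C\<in>Int_complex K. YY ^ card C) = 1 + (\<Sum>x\<in>?P. YY * (\<Sum>C\<in>order_complex (belowP ?P int_le x) int_le. YY ^ card C))"
    unfolding Int_complex_def by (rule ip.chain_sum[OF finP])
  also have "(\<Sum>x\<in>?P. YY * (\<Sum>C\<in>order_complex (belowP ?P int_le x) int_le. YY ^ card C))
      = (\<Sum>x\<in>?P. fps_X * GG (card (snd x - fst x)))"
  proof (rule sum.cong)
    fix x assume x: "x \<in> ?P"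
    obtain A B where xx: "x = (A,B)" by (cases x)
    show "YY * (\<Sum>C\<in>order_complex (belowP ?P int_le x) int_le. YY ^ card C) = fps_X * GG (card (snd x - fst x))"
      using E_formula[OF K, of A B] x xx YY_1X by (simp add: mult.assoc[symmetric])
  qed simp
  also have "(\<Sum>x\<in>?P. fps_X * GG (card (snd x - fst x))) = fps_X * (\<Sum>x\<in>?P. GG (card (snd x - fst x)))"
    by (simp add: sum_distrib_left)
  also have "(\<Sum>x\<in>?P. GG (card (snd x - fst x))) = Abs_fps (\<lambda>q. \<Sum>B\<in>K. (2 * int q + 2) ^ card B - (2 * int q + 1) ^ card B)"
  proof (rule fps_ext)
    fix q
    let ?c = "2 * int q + 1"
    have "(\<Sum>x\<in>?P. GG (card (snd x - fst x))) $ q = (\<Sum>x\<in>?P. ?c ^ card (snd x - fst x))"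
      by (simp add: fps_sum_nth GG_def)
    also have "\<dots> = (\<Sum>(B,A)\<in>Sigma K (\<lambda>B. Pow B - {{}}). ?c ^ card (B - A))"
      unfolding Pimg by (subst sum.reindex) (auto simp: inj_on_def case_prod_beta)
    also have "\<dots> = (\<Sum>B\<in>K. \<Sum>A\<in>Pow B - {{}}. ?c ^ card (B - A))"
      by (rule sum.Sigma[symmetric]) (use finK sc_finite_face[OF K] in auto)
    also have "\<dots> = (\<Sum>B\<in>K. (2 * int q + 2) ^ card B - (2 * int q + 1) ^ card B)"
    proof (rule sum.cong)
      fix B assume B: "B \<in> K"
      have fB: "finite B" using sc_finite_face[OF K B] .
      have "(\<Sum>A\<in>Pow B - {{}}. ?c ^ card (B - A)) = (\<Sum>A\<in>Pow B. ?c ^ card (B - A)) - ?c ^ card B"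
        using fB by (simp add: sum_diff1)
      also have "(\<Sum>A\<in>Pow B. ?c ^ card (B - A)) = (1 + ?c) ^ card B" by (rule sum_pow_subsets[OF fB])
      finally show "(\<Sum>A\<in>Pow B - {{}}. ?c ^ card (B - A)) = (2 * int q + 2) ^ card B - (2 * int q + 1) ^ card B"
        by (simp add: add_ac)
    qed simp
    finally show "(\<Sum>x\<in>?P. GG (card (snd x - fst x))) $ q = Abs_fps (\<lambda>q. \<Sum>B\<in>K. (2 * int q + 2) ^ card B - (2 * int q + 1) ^ card B) $ q"
      by simp
  qed
  finally show ?thesis .
qed


lemma card_face_le:
  assumes K: "simplicial_complex K" "Max (card ` K) = n" and B: "B \<in> K"
  shows "card B \<le> n"
proof -
  have "finite K" using K by (simp add: simplicial_complex_def)
  then have "card B \<le> Max (card ` K)" using B by (intro Max_ge) auto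
  then show ?thesis using K(2) by simp
qed

lemma chain_card_le:
  assumes K: "simplicial_complex K" "Max (card ` K) = n" and C: "C \<in> Int_complex K"
  shows "card C \<le> n"
proof -
  have CP: "C \<subseteq> int_poset K" and cmp: "\<forall>x\<in>C. \<forall>y\<in>C. int_le x y \<or> int_le y x" and fC: "finite C"
    using C by (auto simp: Int_complex_def order_complex_def)
  let ?f = "\<lambda>(A::'a set, B::'a set). card B - card A"
  have mono: "?f x < ?f y" if "x \<in> C" "y \<in> C" "int_le x y" "x \<noteq> y" for x y
  proof -
    obtain A B A' B' where xy: "x = (A,B)" "y = (A',B')" by (cases x, cases y)
    have ABK: "A \<noteq> {}" "A \<subseteq> B" "B \<in> K" "A' \<subseteq> B'" "B' \<in> K" using CP that(1,2) xy by (auto simp: int_poset_def)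
    have fin: "finite B'" using sc_finite_face[OF K(1) ABK(5)] .
    have sub: "A' \<subseteq> A" "B \<subseteq> B'" using that(3) xy by (auto simp: int_le_def)
    have ne: "A' \<subset> A \<or> B \<subset> B'" using sub that(4) xy by auto
    have fA: "finite A" "finite B" "finite A'"
      using finite_subset[OF _ fin, of A] finite_subset[OF _ fin, of B] finite_subset[OF _ fin, of A'] sub ABK by auto
    have c1: "card A' \<le> card A" "card B \<le> card B'" "card A \<le> card B" "card A' \<le> card B'"
      using card_mono[OF fA(1) sub(1)] card_mono[OF fin sub(2)] card_mono[OF fA(2) ABK(2)] card_mono[OF fin ABK(4)]
      by auto
    have "card A' < card A \<or> card B < card B'"
      using ne psubset_card_mono[OF fA(1), of A'] psubset_card_mono[OF fin, of B] by blast
    then show ?thesis using xy c1 by auto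
  qed
  have inj: "inj_on ?f C"
  proof (rule inj_onI)
    fix x y assume xy: "x \<in> C" "y \<in> C" "?f x = ?f y"
    show "x = y"
    proof (rule ccontr)
      assume ne: "x \<noteq> y"
      have "int_le x y \<or> int_le y x" using cmp xy by blast
      then show False
      proof
        assume "int_le x y" then have "?f x < ?f y" using mono[OF xy(1,2) _ ne] by blast
        then show False using xy(3) by simp
      next
        assume "int_le y x" then have "?f y < ?f x" using mono[OF xy(2,1) _ ne[symmetric]] by blast
        then show False using xy(3) by simp
      qed
    qed
  qed
  have rng: "?f ` C \<subseteq> {..<n}"
  proof
    fix z assume "z \<in> ?f ` C"
    then obtain A B where "(A,B) \<in> C" "z = card B - card A" by auto
    then have "A \<noteq> {}" "A \<subseteq> B" "B \<in> K" using CP by (auto simp: int_poset_def)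
    moreover have "finite B" using sc_finite_face[OF K(1)] \<open>B \<in> K\<close> by blast
    moreover then have "finite A" using finite_subset[OF \<open>A \<subseteq> B\<close>] by blast
    ultimately have "card A \<ge> 1" "card B \<le> n" "card A \<le> card B"
    proof -
      assume a: "A \<noteq> {}" "A \<subseteq> B" "B \<in> K" "finite A" "finite B"
      show "card A \<ge> 1" using a by (simp add: Suc_le_eq card_gt_0_iff)
      show "card B \<le> n" using card_face_le[OF K a(3)] .
      show "card A \<le> card B" using card_mono[OF a(5) a(2)] .
    qed
    then show "z \<in> {..<n}" using \<open>z = card B - card A\<close> by auto
  qed
  have "card C = card (?f ` C)" using card_image[OF inj] by (rule sym)
  also have "\<dots> \<le> card {..<n}" by (rule card_mono[OF finite_lessThan rng])
  also have "card {..<n} = n" by (rule card_lessThan)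
  finally show ?thesis .
qed

lemma fps_1mX: "fps_of_poly [:1, -1:] = (1 - fps_X :: int fps)"
proof -
  have "fps_of_poly [:1, -1::int:] = fps_const 1 + fps_of_poly [:-1:] * fps_X"
    by (rule fps_of_poly_pCons)
  also have "fps_of_poly [:-1::int:] = - 1" by (simp add: fps_of_poly_const)
  finally show ?thesis by simp
qed

lemma hpoly_term_fps:
  assumes "k \<le> n"
  shows "fps_of_poly (monom 1 k * [:1, -1:] ^ (n - k)) * S1 ^ n = (YY :: int fps) ^ k"
proof -
  have "S1 ^ n = S1 ^ k * S1 ^ (n - k)" using assms by (simp add: power_add[symmetric])
  then have "fps_of_poly (monom 1 k * [:1, -1:] ^ (n - k)) * S1 ^ n = fps_X ^ k * S1 ^ k * ((1 - fps_X) * S1) ^ (n - k)"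
    by (simp add: fps_of_poly_mult fps_of_poly_power fps_1mX fps_of_poly_monom' power_mult_distrib mult_ac)
  also have "\<dots> = YY ^ k" by (simp add: S1_inv YY_def power_mult_distrib)
  finally show ?thesis .
qed

lemma hpoly_fps:
  assumes "\<And>F. F \<in> L \<Longrightarrow> card F \<le> n"
  shows "fps_of_poly (h_poly n L) * S1 ^ n = (\<Sum>F\<in>L. YY ^ card F)"
  unfolding h_poly_def fps_of_poly_sum sum_distrib_right
  by (rule sum.cong) (auto intro!: hpoly_term_fps assms)

definition Hom :: "nat \<Rightarrow> int poly \<Rightarrow> int \<Rightarrow> int" where
  "Hom n p x = (\<Sum>j\<le>n. coeff p j * x ^ j * (x + 1) ^ (n - j))"

lemma Hom_diff: "Hom n (p - q) x = Hom n p x - Hom n q x"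
  unfolding Hom_def by (simp add: algebra_simps sum_subtractf)

lemma Hom_sum: "Hom n (\<Sum>F\<in>A. p F) x = (\<Sum>F\<in>A. Hom n (p F) x)"
  unfolding Hom_def coeff_sum by (simp add: sum_distrib_right sum.swap[of _ A])

lemma Hom_Suc:
  assumes "degree p \<le> d"
  shows "Hom (Suc d) p x = (x + 1) * Hom d p x"
proof -
  have "Hom (Suc d) p x = (\<Sum>j\<le>d. coeff p j * x ^ j * (x + 1) ^ (Suc d - j)) + coeff p (Suc d) * x ^ Suc d"
    unfolding Hom_def by simp
  also have "coeff p (Suc d) = 0" using assms by (simp add: coeff_eq_0)
  also have "(\<Sum>j\<le>d. coeff p j * x ^ j * (x + 1) ^ (Suc d - j)) = (x + 1) * Hom d p x"
    unfolding Hom_def sum_distrib_left by (rule sum.cong) (auto simp: Suc_diff_le)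
  finally show ?thesis by simp
qed

lemma degree_term: "degree (monom (1::int) m * [:1, -1:] ^ k) \<le> m + k"
proof -
  have "degree (monom (1::int) m * [:1, -1:] ^ k) \<le> degree (monom (1::int) m) + degree ([:1, -1::int:] ^ k)"
    by (rule degree_mult_le)
  also have "degree ([:1, -1:] ^ k :: int poly) \<le> degree [:1, -1::int:] * k" by (rule degree_power_le)
  finally show ?thesis using degree_monom_le[of "1::int" m] by simp
qed

lemma Hom_term: "Hom (m + k) (monom 1 m * [:1, -1:] ^ k) x = x ^ m"
proof (induction k arbitrary: m)
  case 0
  have "Hom m (monom 1 m) x = (\<Sum>j\<le>m. (if j = m then x ^ m else 0))"
    unfolding Hom_def by (rule sum.cong) (auto simp: coeff_monom)
  then show ?case by simp
next
  case (Suc k)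
  have e: "monom (1::int) m * [:1, -1:] ^ Suc k = monom 1 m * [:1, -1:] ^ k - monom 1 (Suc m) * [:1, -1:] ^ k"
  proof -
    have "monom (1::int) m * [:1, -1:] = monom 1 m - monom 1 (Suc m)"
    proof -
      have e: "[:1, -1::int:] = 1 - monom 1 1" by (simp add: monom_Suc one_pCons)
      have "monom (1::int) m * (1 - monom 1 1) = monom 1 m - monom 1 m * monom 1 1"
        by (simp only: right_diff_distrib mult_1_right)
      also have "monom (1::int) m * monom 1 1 = monom 1 (Suc m)" by (simp add: mult_monom)
      finally show ?thesis unfolding e .
    qed
    moreover have "monom (1::int) m * [:1, -1:] ^ Suc k = (monom 1 m * [:1, -1:]) * [:1, -1:] ^ k"
      by (simp only: power_Suc mult.assoc)
    ultimately have "monom (1::int) m * [:1, -1:] ^ Suc k = (monom 1 m - monom 1 (Suc m)) * [:1, -1:] ^ k"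
      by simp
    then show ?thesis by (simp add: algebra_simps)
  qed
  have "Hom (m + Suc k) (monom 1 m * [:1, -1:] ^ Suc k) x
      = Hom (Suc (m + k)) (monom 1 m * [:1, -1:] ^ k) x - Hom (Suc m + k) (monom 1 (Suc m) * [:1, -1:] ^ k) x"
    unfolding e Hom_diff by simp
  also have "Hom (Suc (m + k)) (monom 1 m * [:1, -1:] ^ k) x = (x + 1) * x ^ m"
    using Hom_Suc[OF degree_term[of m k]] Suc.IH[of m] by simp
  also have "Hom (Suc m + k) (monom 1 (Suc m) * [:1, -1:] ^ k) x = x ^ Suc m" by (rule Suc.IH)
  finally show ?case by (simp add: algebra_simps)
qed

lemma Hom_hpoly:
  assumes "\<And>F. F \<in> L \<Longrightarrow> card F \<le> n"
  shows "Hom n (h_poly n L) x = (\<Sum>F\<in>L. x ^ card F)"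
  unfolding h_poly_def Hom_sum
proof (rule sum.cong)
  fix F assume "F \<in> L"
  then have "card F + (n - card F) = n" using assms by simp
  then show "Hom n (monom 1 (card F) * [:1, -1:] ^ (n - card F)) x = x ^ card F"
    using Hom_term[of "card F" "n - card F" x] by simp
qed simp


lemma h0_one:
  assumes K: "simplicial_complex K"
  shows "coeff (h_poly n K) 0 = 1"
proof -
  have "coeff (h_poly n K) 0 = (\<Sum>F\<in>K. if card F = 0 then 1 else 0)"
    unfolding h_poly_def coeff_sum coeff_monom_mult by (rule sum.cong) (auto simp: coeff_0_power)
  also have "\<dots> = (\<Sum>F\<in>{{}}. 1)"
  proof -
    have finK: "finite K" using K by (simp add: simplicial_complex_def)
    have "{F\<in>K. card F = 0} = {{}}" using K by (auto simp: simplicial_complex_def)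
    then show ?thesis using finK by (simp add: sum.inter_filter[symmetric])
  qed
  finally show ?thesis by simp
qed

lemma S1n_inv: "S1 ^ n * (1 - fps_X) ^ n = 1"
  using S1_inv by (simp add: power_mult_distrib[symmetric] mult.commute)

theorem h_Int_eq:
  assumes K: "simplicial_complex K" "Max (card ` K) = n"
  shows "h_poly n (Int_complex K) = (\<Sum>j\<le>n. smult (coeff (h_poly n K) j) (Bplus (n+1) (j+1)))"
proof -
  let ?L = "h_poly n (Int_complex K)"
  let ?R = "\<Sum>j\<le>n. smult (coeff (h_poly n K) j) (Bplus (n+1) (j+1))"
  let ?h = "\<lambda>j. coeff (h_poly n K) j"
  have L: "fps_of_poly ?L * S1 ^ n = 1 + fps_X * Abs_fps (\<lambda>q. \<Sum>B\<in>K. (2 * int q + 2) ^ card B - (2 * int q + 1) ^ card B)"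
    using hpoly_fps[of "Int_complex K" n] chain_card_le[OF K] Int_chain_sum[OF K(1)] by simp
  have R: "fps_of_poly ?R * S1 ^ n = (\<Sum>j\<le>n. fps_const (?h j) * tB (n+1) (int (j+1)))"
    unfolding fps_of_poly_sum sum_distrib_right
    by (rule sum.cong) (simp_all add: fps_of_poly_smult tB_def Bplus_Bg mult.assoc)
  have cl: "tB (n+1) (int (j+1)) $ q = ap (n+1) (j+1) q" if "j \<le> n" for j q
  proof -
    have "\<forall>j\<in>{1..n+1}. \<forall>q. tB (n+1) (int j) $ q = ap (n+1) j q" using tB_closed[of "n+1"] by simp
    moreover have "j + 1 \<in> {1..n+1}" using that by simp
    ultimately show ?thesis by blast
  qed
  have hK: "\<And>F. F \<in> K \<Longrightarrow> card F \<le> n" using card_face_le[OF K] by blast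
  have eq: "fps_of_poly ?L * S1 ^ n = fps_of_poly ?R * S1 ^ n"
  proof (rule fps_ext)
    fix q
    show "(fps_of_poly ?L * S1 ^ n) $ q = (fps_of_poly ?R * S1 ^ n) $ q"
    proof (cases "q = 0")
      case True
      have "(fps_of_poly ?R * S1 ^ n) $ q = (\<Sum>j\<le>n. ?h j * ap (n+1) (j+1) 0)"
        unfolding R fps_sum_nth using True cl by simp
      also have "\<dots> = (\<Sum>j\<in>{0}. ?h j * ap (n+1) (j+1) 0)"
        by (rule sum.mono_neutral_right) (auto simp: ap_def)
      also have "\<dots> = 1" using h0_one[OF K(1)] by (simp add: ap_def)
      finally show ?thesis unfolding L using True by simp
    next
      case False
      then obtain p where p: "q = Suc p" by (cases q) auto
      have "(fps_of_poly ?R * S1 ^ n) $ q = (\<Sum>j\<le>n. ?h j * ap (n+1) (j+1) q)"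
        unfolding R fps_sum_nth using cl by simp
      also have "\<dots> = (\<Sum>j\<le>n. ?h j * ((2 * int q) ^ j * (2 * int q + 1) ^ (n - j)))
          - (\<Sum>j\<le>n. ?h j * ((2 * int q - 1) ^ j * (2 * int q) ^ (n - j)))"
        unfolding sum_subtractf[symmetric] by (rule sum.cong) (use False in \<open>auto simp: ap_def algebra_simps\<close>)
      also have "(\<Sum>j\<le>n. ?h j * ((2 * int q) ^ j * (2 * int q + 1) ^ (n - j))) = Hom n (h_poly n K) (2 * int q)"
        unfolding Hom_def by (simp add: mult.assoc)
      also have "(\<Sum>j\<le>n. ?h j * ((2 * int q - 1) ^ j * (2 * int q) ^ (n - j))) = Hom n (h_poly n K) (2 * int q - 1)"
        unfolding Hom_def by (simp add: mult.assoc)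
      also have "Hom n (h_poly n K) (2 * int q) - Hom n (h_poly n K) (2 * int q - 1)
          = (\<Sum>B\<in>K. (2 * int q) ^ card B - (2 * int q - 1) ^ card B)"
      proof -
        have "Hom n (h_poly n K) (2 * int q) - Hom n (h_poly n K) (2 * int q - 1)
          = (\<Sum>B\<in>K. (2 * int q) ^ card B) - (\<Sum>B\<in>K. (2 * int q - 1) ^ card B)"
          by (simp only: Hom_hpoly[OF hK])
        also have "\<dots> = (\<Sum>B\<in>K. (2 * int q) ^ card B - (2 * int q - 1) ^ card B)"
          by (rule sum_subtractf[symmetric])
        finally show ?thesis .
      qed
      also have "\<dots> = (fps_of_poly ?L * S1 ^ n) $ q"
        unfolding L using p by (simp add: algebra_simps)
      finally show ?thesis by simp
    qed
  qed
  have "fps_of_poly ?L = fps_of_poly ?L * (S1 ^ n * (1 - fps_X) ^ n)" by (simp add: S1n_inv)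
  also have "\<dots> = fps_of_poly ?R * (S1 ^ n * (1 - fps_X) ^ n)" using eq by (simp add: mult.assoc[symmetric])
  also have "\<dots> = fps_of_poly ?R" by (simp add: S1n_inv)
  finally show ?thesis by (simp add: fps_of_poly_eq_iff)
qed

lemma sum_fold:
  fixes f :: "nat \<Rightarrow> 'b :: comm_monoid_add"
  shows "(\<Sum>j\<le>n. f j) = (\<Sum>j\<le>n div 2. if 2 * j \<noteq> n then f j + f (n - j) else f j)"
proof -
  have split: "{..n} = {..n div 2} \<union> {n div 2<..n}" by auto
  have "(\<Sum>j\<le>n. f j) = (\<Sum>j\<le>n div 2. f j) + (\<Sum>j\<in>{n div 2<..n}. f j)"
    unfolding split by (rule sum.union_disjoint) auto
  also have "(\<Sum>j\<in>{n div 2<..n}. f j) = (\<Sum>j\<in>{j. j \<le> n div 2 \<and> 2 * j \<noteq> n}. f (n - j))"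
  proof (rule sum.reindex_bij_witness[where i="\<lambda>j. n - j" and j="\<lambda>j. n - j"])
    fix a assume a: "a \<in> {j. j \<le> n div 2 \<and> 2 * j \<noteq> n}"
    then have "a \<le> n div 2" "2 * a \<noteq> n" by auto
    then have "a \<le> n" "n div 2 < n - a" by presburger+
    then show "n - (n - a) = a" "n - a \<in> {n div 2<..n}" by auto
  next
    fix a assume "a \<in> {n div 2<..n}"
    then have a: "n div 2 < a" "a \<le> n" by auto
    then have "n - a \<le> n div 2" "2 * (n - a) \<noteq> n" by presburger+
    then show "n - (n - a) = a" "n - a \<in> {j. j \<le> n div 2 \<and> 2 * j \<noteq> n}" "f (n - (n - a)) = f a" using a by auto
  qed
  also have "\<dots> = (\<Sum>j\<le>n div 2. if 2 * j \<noteq> n then f (n - j) else 0)"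
  proof -
    have "{j. j \<le> n div 2 \<and> 2 * j \<noteq> n} = {j \<in> {..n div 2}. 2 * j \<noteq> n}" by auto
    moreover have "(\<Sum>j\<in>{j \<in> {..n div 2}. 2 * j \<noteq> n}. f (n - j)) = (\<Sum>j\<le>n div 2. if 2 * j \<noteq> n then f (n - j) else 0)"
      by (rule sum.inter_filter) simp
    ultimately show ?thesis by simp
  qed
  also have "(\<Sum>j\<le>n div 2. f j) + (\<Sum>j\<le>n div 2. if 2 * j \<noteq> n then f (n - j) else 0)
      = (\<Sum>j\<le>n div 2. f j + (if 2 * j \<noteq> n then f (n - j) else 0))"
    by (rule sum.distrib[symmetric])
  also have "\<dots> = (\<Sum>j\<le>n div 2. if 2 * j \<noteq> n then f j + f (n - j) else f j)"
    by (rule sum.cong) auto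
  finally show ?thesis .
qed

theorem h_Int_fold:
  assumes K: "simplicial_complex K" "Max (card ` K) = n"
    and sym: "\<forall>i\<le>n. coeff (h_poly n K) i = coeff (h_poly n K) (n - i)"
  shows "h_poly n (Int_complex K) = (\<Sum>j\<le>n div 2. smult (coeff (h_poly n K) j) (BBplus (n + 1) (j + 1)))"
proof -
  let ?h = "\<lambda>j. coeff (h_poly n K) j"
  have "h_poly n (Int_complex K) = (\<Sum>j\<le>n. smult (?h j) (Bplus (n+1) (j+1)))" by (rule h_Int_eq[OF K])
  also have "\<dots> = (\<Sum>j\<le>n div 2. if 2 * j \<noteq> n then smult (?h j) (Bplus (n+1) (j+1)) + smult (?h (n - j)) (Bplus (n+1) (n - j + 1))
       else smult (?h j) (Bplus (n+1) (j+1)))"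
    using sum_fold[where f="\<lambda>j. smult (?h j) (Bplus (n+1) (j+1))" and n=n] by simp
  also have "\<dots> = (\<Sum>j\<le>n div 2. smult (?h j) (BBplus (n + 1) (j + 1)))"
  proof (rule sum.cong)
    fix j assume j: "j \<in> {..n div 2}"
    have jn: "j \<le> n" using j by auto
    have hj0: "?h j = ?h (n - j)" using sym jn by blast
    have hj: "?h (n - j) = ?h j" using hj0 by (rule HOL.sym)
    have e: "n + 1 - (j + 1) + 1 = n - j + 1" using jn by simp
    have c: "(2 * (j + 1) \<noteq> n + 1 + 1) = (2 * j \<noteq> n)" by simp
    show "(if 2 * j \<noteq> n then smult (?h j) (Bplus (n+1) (j+1)) + smult (?h (n - j)) (Bplus (n+1) (n - j + 1))
       else smult (?h j) (Bplus (n+1) (j+1))) = smult (?h j) (BBplus (n + 1) (j + 1))"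
    proof (cases "2 * j = n")
      case True
      then show ?thesis unfolding BBplus_def by simp
    next
      case False
      then show ?thesis unfolding BBplus_def e hj c by (simp add: smult_add_right)
    qed
  qed simp
  finally show ?thesis .
qed

definition basis :: "nat \<Rightarrow> nat \<Rightarrow> int poly" where
  "basis d i = monom 1 i * [:1, 1:] ^ (d - 2 * i)"

definition rep :: "nat \<Rightarrow> int poly \<Rightarrow> (nat \<Rightarrow> int) \<Rightarrow> bool" where
  "rep d p g \<longleftrightarrow> (\<forall>i > d div 2. g i = 0) \<and> p = (\<Sum>i\<le>d div 2. smult (g i) (basis d i))"

definition pal :: "nat \<Rightarrow> int poly \<Rightarrow> bool" where
  "pal d p \<longleftrightarrow> (\<forall>i. coeff p i = (if i \<le> d then coeff p (d - i) else 0))"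

lemma coeff_basis: "coeff (basis d k) i = (if i < k then 0 else if i = k then 1 else coeff (basis d k) i)"
  unfolding basis_def by (auto simp: coeff_monom_mult coeff_0_power)

lemma rep_unique:
  assumes "rep d p g" "rep d p g'"
  shows "g = g'"
proof -
  let ?D = "d div 2"
  let ?h = "\<lambda>i. g i - g' i"
  have z: "(\<Sum>i\<le>?D. smult (?h i) (basis d i)) = 0"
    using assms unfolding rep_def by (simp add: smult_diff_left sum_subtractf)
  have "?h i = 0" if "i \<le> ?D" for i
    using that
  proof (induction i rule: less_induct)
    case (less i)
    have "0 = coeff (\<Sum>k\<le>?D. smult (?h k) (basis d k)) i" using z by simp
    also have "\<dots> = (\<Sum>k\<le>?D. ?h k * coeff (basis d k) i)" by (simp add: coeff_sum)
    also have "\<dots> = (\<Sum>k\<le>?D. if k = i then ?h i else 0)"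
    proof (rule sum.cong)
      fix k assume k: "k \<in> {..?D}"
      show "?h k * coeff (basis d k) i = (if k = i then ?h i else 0)"
      proof (cases "k < i")
        case True then show ?thesis using less.IH[of k] k by auto
      next
        case False
        then show ?thesis using coeff_basis[of d k i] by (cases "k = i") auto
      qed
    qed simp
    also have "\<dots> = ?h i" using less.prems by simp
    finally show ?case by simp
  qed
  moreover have "?h i = 0" if "i > ?D" for i using assms that unfolding rep_def by auto
  ultimately have "\<And>i. ?h i = 0" by (meson not_le)
  then show ?thesis by (simp add: fun_eq_iff)
qed

lemma pCons0_sum: "pCons 0 (\<Sum>i\<in>A. f i) = (\<Sum>i\<in>A. pCons 0 (f i))"
  by (rule poly_eqI) (simp add: coeff_sum coeff_pCons split: nat.split)

lemma smult_sum_right: "smult c (\<Sum>i\<in>A. f i) = (\<Sum>i\<in>A. smult c (f i))"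
  by (induction A rule: infinite_finite_induct) (simp_all add: smult_add_right)

lemma pal_binom: "pal d ([:1, 1:] ^ d)"
  unfolding pal_def
proof
  fix i
  show "coeff ([:1, 1:] ^ d) i = (if i \<le> d then coeff ([:1, 1:] ^ d) (d - i) else (0::int))"
  proof (cases "i \<le> d")
    case True
    then show ?thesis using binomial_symmetric[OF True] by (simp add: coeff_linear_poly_power)
  next
    case False
    have "degree ([:1, 1::int:] ^ d) \<le> d" using degree_power_le[of "[:1, 1::int:]" d] by simp
    then show ?thesis using False by (simp add: coeff_eq_0)
  qed
qed

lemma rep_exists: "pal d p \<Longrightarrow> \<exists>g. rep d p g"
proof (induction d arbitrary: p rule: less_induct)
  case (less d)
  let ?c = "coeff p 0"
  show ?case
  proof (cases "d < 2")
    case True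
    then have d01: "d = 0 \<or> d = 1" by auto
    let ?g = "\<lambda>i. if i = 0 then ?c else 0"
    have pl: "coeff p i = (if i \<le> d then coeff p (d - i) else 0)" for i
      using less.prems unfolding pal_def by blast
    have "p = smult ?c (basis d 0)"
    proof (rule poly_eqI)
      fix i
      show "coeff p i = coeff (smult ?c (basis d 0)) i"
      proof (cases "d = 0")
        case True
        then have b: "basis d 0 = 1" by (simp add: basis_def)
        show ?thesis
        proof (cases "i = 0")
          case True then show ?thesis using b by simp
        next
          case False then show ?thesis using b pl[of i] \<open>d = 0\<close> by (cases i) (simp_all add: coeff_1)
        qed
      next
        case False
        then have d1: "d = 1" using d01 by simp
        then have b: "basis d 0 = [:1, 1:]" by (simp add: basis_def)
        have c1: "coeff p 1 = ?c" using pl[of 1] d1 by simp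
        show ?thesis
        proof (cases i)
          case 0 then show ?thesis using b by simp
        next
          case (Suc k)
          show ?thesis
          proof (cases k)
            case 0 then show ?thesis using b c1 Suc by simp
          next
            case (Suc k')
            then show ?thesis using b pl[of i] d1 \<open>i = Suc k\<close> by simp
          qed
        qed
      qed
    qed
    moreover have "(\<Sum>i\<le>d div 2. smult (?g i) (basis d i)) = smult ?c (basis d 0)" using d01 by auto
    ultimately have "rep d p ?g" unfolding rep_def by auto
    then show ?thesis by blast
  next
    case False
    then have d2: "d \<ge> 2" by simp
    let ?q = "p - smult ?c ([:1, 1:] ^ d)"
    have palq: "pal d ?q" unfolding pal_def
    proof
      fix i
      have a: "coeff p i = (if i \<le> d then coeff p (d - i) else 0)" using less.prems unfolding pal_def by blast
      have b: "coeff ([:1, 1:] ^ d) i = (if i \<le> d then coeff ([:1, 1:] ^ d) (d - i) else (0::int))"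
        using pal_binom[of d] unfolding pal_def by blast
      show "coeff ?q i = (if i \<le> d then coeff ?q (d - i) else 0)"
      proof (cases "i \<le> d")
        case True
        have a': "coeff p i = coeff p (d - i)" using a unfolding if_P[OF True] .
        have b': "coeff ([:1, 1:] ^ d) i = coeff ([:1, 1::int:] ^ d) (d - i)" using b unfolding if_P[OF True] .
        have "coeff ?q i = coeff p i - ?c * coeff ([:1, 1:] ^ d) i" by simp
        also have "\<dots> = coeff p (d - i) - ?c * coeff ([:1, 1:] ^ d) (d - i)" unfolding a' b' ..
        also have "\<dots> = coeff ?q (d - i)" by simp
        finally show ?thesis using True by simp
      next
        case False
        have a': "coeff p i = 0" using a unfolding if_not_P[OF False] .
        have b': "coeff ([:1, 1:] ^ d) i = (0::int)" using b unfolding if_not_P[OF False] .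
        show ?thesis using False a' b' by simp
      qed
    qed
    have q0: "coeff ?q 0 = 0" by (simp add: coeff_0_power)
    obtain a q' where qq: "?q = pCons a q'" by (rule pCons_cases)
    have "coeff ?q 0 = a" unfolding qq by simp
    then have a0: "a = 0" using q0 by simp
    have pq: "p = smult ?c ([:1, 1:] ^ d) + pCons 0 q'"
    proof -
      have "p = smult ?c ([:1, 1:] ^ d) + ?q" by simp
      also have "?q = pCons 0 q'" unfolding qq a0 ..
      finally show ?thesis .
    qed
    have palq': "pal (d - 2) q'"
      unfolding pal_def
    proof
      fix i
      have cik: "coeff q' k = coeff ?q (Suc k)" for k unfolding qq by simp
      have ci: "coeff q' i = coeff ?q (Suc i)" by (rule cik)
      show "coeff q' i = (if i \<le> d - 2 then coeff q' (d - 2 - i) else 0)"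
      proof (cases "i \<le> d - 2")
        case True
        have "Suc i \<le> d" using True d2 by simp
        then have "coeff ?q (Suc i) = coeff ?q (d - Suc i)"
          using palq[unfolded pal_def, rule_format, of "Suc i"] by (simp only: if_True)
        also have "d - Suc i = Suc (d - 2 - i)" using True d2 by simp
        finally have "coeff ?q (Suc i) = coeff ?q (Suc (d - 2 - i))" .
        then show ?thesis unfolding ci cik[of "d - 2 - i", symmetric] using True by simp
      next
        case F: False
        show ?thesis
        proof (cases "Suc i = d")
          case True
          have le: "Suc i \<le> d" using True by simp
          have "coeff ?q (Suc i) = coeff ?q (d - Suc i)"
            using palq[unfolded pal_def, rule_format, of "Suc i"] unfolding if_P[OF le] .
          then have "coeff ?q (Suc i) = coeff ?q 0" using True by simp
          then show ?thesis using ci q0 F by simp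
        next
          case False
          then have "Suc i > d" using F d2 by simp
          then have nle: "\<not> Suc i \<le> d" by simp
          have "coeff ?q (Suc i) = 0"
            using palq[unfolded pal_def, rule_format, of "Suc i"] unfolding if_not_P[OF nle] .
          then show ?thesis using ci F by simp
        qed
      qed
    qed
    obtain g' where g': "rep (d - 2) q' g'" using less.IH[of "d - 2"] palq' d2 by auto
    define g where "g i = (if i = 0 then ?c else g' (i - 1))" for i
    have Dd: "d div 2 = Suc ((d - 2) div 2)" using d2 by presburger
    have supp: "\<forall>i > d div 2. g i = 0"
    proof (intro allI impI)
      fix i assume "i > d div 2"
      then have "i \<noteq> 0" "i - 1 > (d - 2) div 2" using Dd by auto
      then show "g i = 0" using g' unfolding rep_def g_def by auto
    qed
    have "(\<Sum>i\<le>d div 2. smult (g i) (basis d i))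
        = smult (g 0) (basis d 0) + (\<Sum>i\<le>(d - 2) div 2. smult (g (Suc i)) (basis d (Suc i)))"
      unfolding Dd by (rule sum.atMost_Suc_shift)
    also have "(\<Sum>i\<le>(d - 2) div 2. smult (g (Suc i)) (basis d (Suc i)))
        = (\<Sum>i\<le>(d - 2) div 2. pCons 0 (smult (g' i) (basis (d - 2) i)))"
    proof (rule sum.cong)
      fix i assume "i \<in> {..(d - 2) div 2}"
      have e: "d - 2 * Suc i = d - 2 - 2 * i" by simp
      show "smult (g (Suc i)) (basis d (Suc i)) = pCons 0 (smult (g' i) (basis (d - 2) i))"
        unfolding g_def basis_def e by (simp add: monom_Suc)
    qed simp
    also have "\<dots> = pCons 0 q'"
      using g' unfolding rep_def pCons0_sum[symmetric] by simp
    also have "smult (g 0) (basis d 0) = smult ?c ([:1, 1:] ^ d)" by (simp add: g_def basis_def)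
    finally have "(\<Sum>i\<le>d div 2. smult (g i) (basis d i)) = p"
      using pq by simp
    then have "rep d p g" using supp unfolding rep_def by simp
    then show ?thesis by blast
  qed
qed

lemma gamma_vec_rep: "pal d p \<Longrightarrow> rep d p (gamma_vec d p)"
proof -
  assume "pal d p"
  then obtain g where g: "rep d p g" using rep_exists by blast
  have "gamma_vec d p = g"
    unfolding gamma_vec_def
  proof (rule the_equality)
    show "(\<forall>i>d div 2. g i = 0) \<and> p = (\<Sum>i\<le>d div 2. smult (g i) (monom 1 i * [:1, 1:] ^ (d - 2 * i)))"
      using g unfolding rep_def basis_def by simp
  next
    fix g' assume "(\<forall>i>d div 2. g' i = 0) \<and> p = (\<Sum>i\<le>d div 2. smult (g' i) (monom 1 i * [:1, 1:] ^ (d - 2 * i)))"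
    then have "rep d p g'" unfolding rep_def basis_def by simp
    then show "g' = g" using rep_unique g by blast
  qed
  then show ?thesis using g by simp
qed

lemma gamma_vec_eq: "rep d p g \<Longrightarrow> gamma_vec d p = g"
  unfolding gamma_vec_def
proof (rule the_equality)
  assume "rep d p g"
  then show "(\<forall>i>d div 2. g i = 0) \<and> p = (\<Sum>i\<le>d div 2. smult (g i) (monom 1 i * [:1, 1:] ^ (d - 2 * i)))"
    unfolding rep_def basis_def by simp
next
  fix g' assume "rep d p g" "(\<forall>i>d div 2. g' i = 0) \<and> p = (\<Sum>i\<le>d div 2. smult (g' i) (monom 1 i * [:1, 1:] ^ (d - 2 * i)))"
  then show "g' = g" using rep_unique unfolding rep_def basis_def by blast
qed

lemma rep_lin:
  assumes "\<And>j. j \<in> A \<Longrightarrow> rep d (Q j) (g j)" "finite A"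
  shows "rep d (\<Sum>j\<in>A. smult (c j) (Q j)) (\<lambda>k. \<Sum>j\<in>A. c j * g j k)"
proof -
  have s: "\<forall>i > d div 2. (\<Sum>j\<in>A. c j * g j i) = 0" using assms(1) unfolding rep_def by auto
  have "(\<Sum>j\<in>A. smult (c j) (Q j)) = (\<Sum>j\<in>A. smult (c j) (\<Sum>i\<le>d div 2. smult (g j i) (basis d i)))"
    using assms(1) unfolding rep_def by (intro sum.cong) auto
  also have "\<dots> = (\<Sum>i\<le>d div 2. smult (\<Sum>j\<in>A. c j * g j i) (basis d i))"
  proof -
    have "(\<Sum>j\<in>A. smult (c j) (\<Sum>i\<le>d div 2. smult (g j i) (basis d i)))
        = (\<Sum>j\<in>A. \<Sum>i\<le>d div 2. smult (c j * g j i) (basis d i))"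
      by (simp add: smult_sum_right smult_smult)
    also have "\<dots> = (\<Sum>i\<le>d div 2. \<Sum>j\<in>A. smult (c j * g j i) (basis d i))"
      by (rule sum.swap)
    also have "\<dots> = (\<Sum>i\<le>d div 2. smult (\<Sum>j\<in>A. c j * g j i) (basis d i))"
      by (simp add: smult_sum)
    finally show ?thesis .
  qed
  finally show ?thesis using s unfolding rep_def by simp
qed

lemma pal_BB:
  assumes j: "1 \<le> j" "j \<le> N"
  shows "pal (N - 1) (BBplus N j)"
proof -
  have N: "N \<ge> 1" using j by simp
  have P: "coeff (Bg N (int k)) r = (if r \<le> N - 1 then coeff (Bg N (int (Suc N - k))) (N - 1 - r) else 0)"
    if "k \<in> {1..N}" for k r using PalP_all[OF N] that unfolding PalP_def by blast
  have j': "Suc N - j \<in> {1..N}" "j \<in> {1..N}" using j by auto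
  have inv: "Suc N - (Suc N - j) = j" using j by simp
  have e: "N - j + 1 = Suc N - j" using j by simp
  show ?thesis unfolding pal_def
  proof
    fix r
    show "coeff (BBplus N j) r = (if r \<le> N - 1 then coeff (BBplus N j) (N - 1 - r) else 0)"
    proof (cases "2 * j \<noteq> N + 1")
      case True
      have B: "BBplus N j = Bg N (int j) + Bg N (int (Suc N - j))"
        unfolding BBplus_def e using True by (simp add: Bplus_Bg)
      show ?thesis
      proof (cases "r \<le> N - 1")
        case True
        have a: "coeff (Bg N (int j)) r = coeff (Bg N (int (Suc N - j))) (N - 1 - r)"
          using P[OF j'(2), of r] True by simp
        have b: "coeff (Bg N (int (Suc N - j))) r = coeff (Bg N (int j)) (N - 1 - r)"
          using P[OF j'(1), of r] True unfolding inv by simp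
        show ?thesis unfolding B coeff_add a b using True by simp
      next
        case False
        have a: "coeff (Bg N (int j)) r = 0" using P[OF j'(2), of r] False by simp
        have b: "coeff (Bg N (int (Suc N - j))) r = 0" using P[OF j'(1), of r] False by simp
        show ?thesis unfolding B coeff_add a b using False by simp
      qed
    next
      case False
      then have jj: "Suc N - j = j" by simp
      have B: "BBplus N j = Bg N (int j)" unfolding BBplus_def using False by (simp add: Bplus_Bg)
      show ?thesis unfolding B using P[OF j'(2), of r] unfolding jj .
    qed
  qed
qed

theorem proposition4p1:
  fixes K :: "'a set set" and n :: nat
  assumes "simplicial_complex K"
    and "Max (card ` K) = n"
    and "\<forall>i\<le>n. coeff (h_poly n K) i = coeff (h_poly n K) (n - i)"
  shows "(\<forall>r. coeff (h_poly n (Int_complex K)) r =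
              (\<Sum>j\<le>n div 2. coeff (h_poly n K) j * coeff (BBplus (n + 1) (j + 1)) r))
       \<and> h_poly n (Int_complex K) = (\<Sum>j\<le>n div 2. smult (coeff (h_poly n K) j) (BBplus (n + 1) (j + 1)))
       \<and> gamma_vec n (h_poly n (Int_complex K)) =
           (\<lambda>k. \<Sum>j\<le>n div 2. coeff (h_poly n K) j * gamma_vec n (BBplus (n + 1) (j + 1)) k)"
proof -
  have H: "h_poly n (Int_complex K) = (\<Sum>j\<le>n div 2. smult (coeff (h_poly n K) j) (BBplus (n + 1) (j + 1)))"
    by (rule h_Int_fold[OF assms])
  have C: "\<forall>r. coeff (h_poly n (Int_complex K)) r =
              (\<Sum>j\<le>n div 2. coeff (h_poly n K) j * coeff (BBplus (n + 1) (j + 1)) r)"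
    unfolding H by (simp add: coeff_sum)
  have R: "rep n (BBplus (n + 1) (j + 1)) (gamma_vec n (BBplus (n + 1) (j + 1)))" if "j \<in> {..n div 2}" for j
  proof -
    have "pal (n + 1 - 1) (BBplus (n + 1) (j + 1))" by (rule pal_BB) (use that in auto)
    then show ?thesis using gamma_vec_rep by simp
  qed
  have "rep n (\<Sum>j\<le>n div 2. smult (coeff (h_poly n K) j) (BBplus (n + 1) (j + 1)))
      (\<lambda>k. \<Sum>j\<le>n div 2. coeff (h_poly n K) j * gamma_vec n (BBplus (n + 1) (j + 1)) k)"
    by (rule rep_lin) (use R in auto)
  then have G: "gamma_vec n (h_poly n (Int_complex K)) =
           (\<lambda>k. \<Sum>j\<le>n div 2. coeff (h_poly n K) j * gamma_vec n (BBplus (n + 1) (j + 1)) k)"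
    unfolding H by (rule gamma_vec_eq)
  show ?thesis using C H G by blast
qed

end
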